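(* Let $0<q<1$, let $s\ge1$ and let $a_1,\dots,a_s,b_1,\dots,b_s$ be positive integers with $\sum_{i=1}^s(a_i+b_i)>2$. Let $\theta$ be real with $|\theta|<1/q$ and $\theta\ne 1/q$, and put $\theta' := q\theta-1$. For tuples $\delta,\epsilon$ of $0$'s and $1$'s write $\delta\cdot\epsilon=\sum_i\delta_i\epsilon_i$ and $\overline\delta\cdot\overline\epsilon=\sum_i(1-\delta_i)(1-\epsilon_i)$. Then \[ \sum_{\substack{\delta,\epsilon\in\{0,1\}^s\\ \delta_1<a_1,\ \epsilon_s<b_s}} (-\theta)^{\overline{\delta}\cdot\overline{\epsilon}}(1-q)^{\delta\cdot\epsilon} f\Big[\prod_{i=1}^s x^{a_i-\delta_i}y^{b_i-\epsilon_i};\theta\Big] = \sum_{\substack{\delta,\epsilon\in \{0,1\}^{s+1}\\ \delta_{s+1}=\epsilon_1=0\\ \delta_1<a_1,\ \epsilon_{s+1}<b_s}} (-\theta')^{\overline{\delta}\cdot\overline{\epsilon}-1}(1-q)^{\delta\cdot\epsilon} f\Big[\prod_{i=1}^s x^{a_i-\delta_i}y^{b_i-\epsilon_{i+1}};\theta'\Big], \] where on the right $\overline\delta\cdot\overline\epsilon$ and $\delta\cdot\epsilon$ are sums over $i=1,\dots,s+1$, and the products of powers of $x,y$ are words (products in order $i=1,\dots,s$) in the non-commuting letters $x,y$.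
   Context: Fix $0<q<1$ and $[x]_q := (1-q^x)/(1-q)$. Let $x,y$ be non-commuting letters. Every word $w$ in $x,y$ that begins with $x$ and ends with $y$ can be written uniquely as $w=x^{k_1-1}y\,x^{k_2-1}y\cdots x^{k_n-1}y$ with integers $k_1\ge2$ and $k_j\ge1$ ($j\ge2$). For such $w$ and complex $\theta$ not of the form $q^{-\nu}[\nu]_q$ ($\nu$ a positive integer), define \[ f[w;\theta] := \sum_{m_1>\cdots>m_n>0}\prod_{j=1}^n \frac{q^{(k_j-1)m_j}}{[m_j]_q^{k_j-1}\big([m_j]_q-\theta q^{m_j}\big)} \] (sum over positive integers). For $|\theta|<1/q$ this equals $\sum_{m\ge0}\theta^m\sum_{c_1+\cdots+c_n=m,\ c_j\ge0}\zeta[k_1+c_1,\dots,k_n+c_n]$, where $\zeta[s_1,\dots,s_n] := \sum_{k_1>\cdots>k_n>0}\prod_j q^{(s_j-1)k_j}/[k_j]_q^{s_j}$ is the multiple $q$-zeta value. *)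

theory Defs
  imports "HOL-Analysis.Analysis" "HOL-Library.FuncSet"
begin

definition qint :: "real \<Rightarrow> nat \<Rightarrow> real" where
  "qint q m = (1 - q ^ m) / (1 - q)"

datatype letter = LX | LY

text \<open>Decomposition w = x^(k1-1) y x^(k2-1) y ... x^(kn-1) y: returns [k1,...,kn].
  The counter c is the number of x's seen since the last y.\<close>
fun word_ks_aux :: "nat \<Rightarrow> letter list \<Rightarrow> nat list" where
  "word_ks_aux c [] = []"
| "word_ks_aux c (LX # w) = word_ks_aux (Suc c) w"
| "word_ks_aux c (LY # w) = Suc c # word_ks_aux 0 w"

definition word_ks :: "letter list \<Rightarrow> nat list" where
  "word_ks w = word_ks_aux 0 w"

definition fq :: "real \<Rightarrow> letter list \<Rightarrow> complex \<Rightarrow> complex" where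
  "fq q w \<theta> =
     (let ks = word_ks w; n = length ks in
      infsum (\<lambda>ms. \<Prod>j<n.
                 complex_of_real (q ^ ((ks ! j - 1) * (ms ! j))) /
                 (complex_of_real (qint q (ms ! j)) ^ (ks ! j - 1) *
                  (complex_of_real (qint q (ms ! j)) - \<theta> * complex_of_real (q ^ (ms ! j)))))
        {ms. length ms = n \<and> sorted_wrt (>) ms \<and> (\<forall>m\<in>set ms. 0 < m)})"

definition xy_word :: "nat \<Rightarrow> (nat \<Rightarrow> nat) \<Rightarrow> (nat \<Rightarrow> nat) \<Rightarrow> letter list" where
  "xy_word s u v = concat (map (\<lambda>i. replicate (u i) LX @ replicate (v i) LY) [1..<s+1])"

end

theory Submission
  imports Defs "HOL-Real_Asymp.Real_Asymp"
begin


definition Xw :: "real \<Rightarrow> nat \<Rightarrow> real" where "Xw q m = q ^ m / qint q m"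
definition Tw :: "real \<Rightarrow> real \<Rightarrow> nat \<Rightarrow> real" where "Tw q th m = 1 / (qint q m - th * q ^ m)"
definition zw :: "real \<Rightarrow> nat \<Rightarrow> real" where "zw q m = 1 / qint q m"
definition d0 :: "nat \<Rightarrow> real" where "d0 m = (if m = 0 then 1 else 0)"

definition Yop :: "real \<Rightarrow> real \<Rightarrow> (nat \<Rightarrow> real) \<Rightarrow> nat \<Rightarrow> real" where
  "Yop q th psi m = (if m = 0 then 0 else Tw q th m * (\<Sum>p<m. psi p))"

fun opL :: "real \<Rightarrow> real \<Rightarrow> letter list \<Rightarrow> (nat \<Rightarrow> real) \<Rightarrow> nat \<Rightarrow> real" where
  "opL q th [] psi m = psi m"
| "opL q th (LX # w) psi m = Xw q m * opL q th w psi m"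
| "opL q th (LY # w) psi m = Yop q th (opL q th w psi) m"

definition good :: "real \<Rightarrow> real \<Rightarrow> real \<Rightarrow> bool" where
  "good q th k \<longleftrightarrow> 0 < k \<and> (\<forall>m\<ge>1. qint q m - th * q ^ m \<ge> k)"

section \<open>q-integers\<close>

lemma qint_0[simp]: "qint q 0 = 0" by (simp add: qint_def)

lemma qint_Suc: "q \<noteq> 1 \<Longrightarrow> qint q (Suc m) = qint q m + q ^ m"
  by (simp add: qint_def field_simps)

lemma qint_mult: "q \<noteq> 1 \<Longrightarrow> (1 - q) * qint q m = 1 - q ^ m"
  by (simp add: qint_def)

lemma qint_ge1: assumes "0 < q" "q < 1" "1 \<le> m" shows "1 \<le> qint q m"
  using assms(3)
proof (induction m rule: dec_induct)
  case base then show ?case using assms by (simp add: qint_def)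
next
  case (step n)
  have "0 \<le> q ^ n" using assms by simp
  moreover have "qint q (Suc n) = qint q n + q ^ n" using assms by (simp add: qint_Suc)
  ultimately show ?case using step by linarith
qed

lemma qint_nonneg: assumes "0 < q" "q < 1" shows "0 \<le> qint q m"
  using assms by (cases "m = 0") (auto intro: order_trans[OF _ qint_ge1])

lemma good_theta: assumes "0 < q" "q < 1" "\<bar>th\<bar> < 1 / q" shows "good q th (1 - \<bar>th\<bar> * q)"
proof -
  have k: "0 < 1 - \<bar>th\<bar> * q" using assms by (simp add: field_simps)
  have "qint q m - th * q ^ m \<ge> 1 - \<bar>th\<bar> * q" if "m \<ge> 1" for m
  proof -
    have "q ^ m \<le> q ^ 1" using assms that by (intro power_decreasing) auto
    then have "\<bar>th\<bar> * q ^ m \<le> \<bar>th\<bar> * q" by (simp add: mult_left_mono)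
    moreover have "th * q ^ m \<le> \<bar>th\<bar> * q ^ m" using assms by (simp add: mult_right_mono)
    moreover have "1 \<le> qint q m" using qint_ge1 assms that by auto
    ultimately show ?thesis by linarith
  qed
  then show ?thesis using k by (simp add: good_def)
qed

lemma good_theta': assumes "0 < q" "q < 1" "\<bar>th\<bar> < 1 / q" shows "good q (q * th - 1) 1"
proof -
  have "q * th < 1" using assms by (simp add: field_simps abs_less_iff)
  then have "(q * th - 1) * q ^ m \<le> 0" for m using assms by (simp add: mult_nonpos_nonneg)
  then show ?thesis using qint_ge1[OF assms(1,2)] unfolding good_def
    by (smt (verit))
qed

lemma Xw_0[simp]: "Xw q 0 = 0" by (simp add: Xw_def)
lemma zw_0[simp]: "zw q 0 = 0" by (simp add: zw_def)

context
  fixes q :: real assumes q0: "0 < q" and q1: "q < 1"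
begin

lemma qne1: "q \<noteq> 1" using q1 by simp


lemma Xw_nonneg: "0 \<le> Xw q m"
  using qint_nonneg[OF q0 q1] q0 by (simp add: Xw_def)

lemma Xw_le_pow: "Xw q m \<le> q ^ m"
proof (cases "m = 0")
  case False
  then have "1 \<le> qint q m" using qint_ge1[OF q0 q1] by simp
  then show ?thesis using q0 by (simp add: Xw_def divide_le_eq_1 field_simps mult_le_cancel_left1)
qed simp

lemma Xw_le1: "Xw q m \<le> 1"
  using Xw_le_pow[of m] q0 q1 by (meson less_imp_le order_trans power_le_one)

lemma good_Tw_pos: "good q th k \<Longrightarrow> 1 \<le> m \<Longrightarrow> 0 < Tw q th m"
  unfolding good_def Tw_def by auto

lemma good_Tw_le: "good q th k \<Longrightarrow> 1 \<le> m \<Longrightarrow> Tw q th m \<le> 1 / k"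
  unfolding good_def Tw_def by (auto intro!: divide_left_mono)

lemma good_den: "good q th k \<Longrightarrow> 1 \<le> m \<Longrightarrow> qint q m - th * q ^ m \<noteq> 0"
  unfolding good_def by force

lemma L2: assumes "good q th k" "1 \<le> m" shows "(1 - th * Xw q m) * Tw q th m = zw q m"
proof -
  have "qint q m \<noteq> 0" using qint_ge1[OF q0 q1 assms(2)] by simp
  moreover have "qint q m - th * q ^ m \<noteq> 0" using good_den[OF assms] .
  ultimately show ?thesis by (simp add: Xw_def Tw_def zw_def field_simps)
qed

lemma L3: assumes "1 \<le> m" shows "zw q m = Xw q m + (1 - q)"
proof -
  have "qint q m \<noteq> 0" using qint_ge1[OF q0 q1 assms] by simp
  moreover have "(1 - q) * qint q m = 1 - q ^ m" by (rule qint_mult[OF qne1])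
  ultimately show ?thesis by (simp add: Xw_def zw_def field_simps)
qed

lemma L4: "Tw q (q * th - 1) m = Tw q th (Suc m)"
  unfolding Tw_def by (simp add: qint_Suc[OF qne1] algebra_simps)

lemma L4_0: "Tw q th 0 = 1 / (- th)"
  unfolding Tw_def by simp

end


lemma Yop_sum: "finite I \<Longrightarrow> Yop q th (\<lambda>p. \<Sum>i\<in>I. F i p) m = (\<Sum>i\<in>I. Yop q th (F i) m)"
  unfolding Yop_def by (simp add: sum_distrib_left sum.swap[of _ I])

lemma Yop_scale: "Yop q th (\<lambda>p. c * f p) m = c * Yop q th f m"
  unfolding Yop_def by (simp add: sum_distrib_left[symmetric] mult_ac)

lemma Yop_add: "Yop q th (\<lambda>p. f p + g p) m = Yop q th f m + Yop q th g m"
  unfolding Yop_def by (simp add: sum.distrib algebra_simps)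

lemma Yop_cong: "(\<And>p. p < m \<Longrightarrow> f p = g p) \<Longrightarrow> Yop q th f m = Yop q th g m"
  unfolding Yop_def by simp

lemma Yop_0[simp]: "Yop q th f 0 = 0" unfolding Yop_def by simp

lemma opL_Nil_fun[simp]: "opL q th [] psi = psi" by (rule ext) simp

lemma opL_sum: "finite I \<Longrightarrow> opL q th w (\<lambda>p. \<Sum>i\<in>I. F i p) m = (\<Sum>i\<in>I. opL q th w (F i) m)"
proof (induction w arbitrary: m)
  case Nil then show ?case by simp
next
  case (Cons l w)
  show ?case
  proof (cases l)
    case LX then show ?thesis using Cons by (simp add: sum_distrib_left)
  next
    case LY
    have "opL q th w (\<lambda>p. \<Sum>i\<in>I. F i p) = (\<lambda>p. \<Sum>i\<in>I. opL q th w (F i) p)"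
      using Cons by auto
    then show ?thesis using LY Cons by (simp add: Yop_sum)
  qed
qed

lemma opL_scale: "opL q th w (\<lambda>p. c * f p) m = c * opL q th w f m"
proof (induction w arbitrary: m)
  case Nil then show ?case by simp
next
  case (Cons l w)
  show ?case
  proof (cases l)
    case LX then show ?thesis using Cons by simp
  next
    case LY
    have "opL q th w (\<lambda>p. c * f p) = (\<lambda>p. c * opL q th w f p)"
      using Cons by auto
    then show ?thesis using LY Cons by (simp add: Yop_scale)
  qed
qed

lemma opL_append: "opL q th (w1 @ w2) psi m = opL q th w1 (opL q th w2 psi) m"
proof (induction w1 arbitrary: m)
  case Nil then show ?case by simp
next
  case (Cons l w)
  show ?case
  proof (cases l)
    case LX then show ?thesis using Cons by simp
  next
    case LY
    have "opL q th (w @ w2) psi = opL q th w (opL q th w2 psi)" using Cons by auto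
    then show ?thesis using LY by simp
  qed
qed

lemma opL_repX: "opL q th (replicate k LX @ w) psi m = Xw q m ^ k * opL q th w psi m"
  by (induction k) auto

lemma opL_repY: "opL q th (replicate k LY @ w) psi = (Yop q th ^^ k) (opL q th w psi)"
proof (induction k)
  case 0 then show ?case by simp
next
  case (Suc k)
  have "opL q th (replicate (Suc k) LY @ w) psi = Yop q th (opL q th (replicate k LY @ w) psi)"
    by (auto intro!: ext)
  then show ?case using Suc by simp
qed

lemma opL_repY0[simp]: "opL q th (replicate k LY) psi = (Yop q th ^^ k) psi"
  using opL_repY[of q th k "[]" psi] by simp

lemma opL_repX0[simp]: "opL q th (replicate k LX) psi m = Xw q m ^ k * psi m"
  using opL_repX[of q th k "[]" psi m] by simp

lemma opL_blk: "opL q th (replicate u LX @ replicate v LY) psi m = Xw q m ^ u * (Yop q th ^^ v) psi m"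
  using opL_repX[of q th u "replicate v LY" psi m] opL_repY[of q th v "[]" psi] by simp

lemma opL_blk2: "opL q th (replicate v LY @ replicate u LX) psi m = (Yop q th ^^ v) (\<lambda>p. Xw q p ^ u * psi p) m"
proof -
  have "opL q th (replicate u LX) psi = (\<lambda>p. Xw q p ^ u * psi p)"
    using opL_repX[of q th u "[]" psi] by auto
  then show ?thesis using opL_repY[of q th v "replicate u LX" psi] by simp
qed

lemma Yopk_sum: "finite I \<Longrightarrow> (Yop q th ^^ k) (\<lambda>p. \<Sum>i\<in>I. F i p) m = (\<Sum>i\<in>I. (Yop q th ^^ k) (F i) m)"
  using opL_sum[of I q th "replicate k LY" F m] opL_repY[of q th k "[]"] by simp

lemma Yopk_scale: "(Yop q th ^^ k) (\<lambda>p. c * f p) m = c * (Yop q th ^^ k) f m"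
  using opL_scale[of q th "replicate k LY" c f m] opL_repY[of q th k "[]"] by simp

lemma Yopk_add: "(Yop q th ^^ k) (\<lambda>p. f p + g p) m = (Yop q th ^^ k) f m + (Yop q th ^^ k) g m"
  using Yopk_sum[where I="{0::nat,1}" and q=q and th=th and k=k and F="\<lambda>i. if i = 0 then f else g" and m=m] by simp

lemma Yopk_0: "1 \<le> k \<Longrightarrow> (Yop q th ^^ k) f 0 = 0"
  by (cases k) auto

section \<open>Sums over PiE\<close>

lemma sum_PiE_ins:
  assumes "x \<notin> S"
  shows "(\<Sum>g\<in>Pi\<^sub>E (insert x S) T. h g) = (\<Sum>y\<in>T x. \<Sum>g\<in>Pi\<^sub>E S T. h (g(x := y)))"
proof -
  have "(\<Sum>g\<in>Pi\<^sub>E (insert x S) T. h g) = (\<Sum>g\<in>(\<lambda>(y, g). g(x := y)) ` (T x \<times> Pi\<^sub>E S T). h g)"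
    by (simp add: PiE_insert_eq)
  also have "\<dots> = (\<Sum>yg\<in>T x \<times> Pi\<^sub>E S T. h ((\<lambda>(y, g). g(x := y)) yg))"
    by (subst sum.reindex[OF inj_combinator[OF assms]]) (simp add: comp_def)
  also have "\<dots> = (\<Sum>y\<in>T x. \<Sum>g\<in>Pi\<^sub>E S T. h (g(x := y)))"
    by (simp add: sum.cartesian_product split_def)
  finally show ?thesis .
qed

lemma sum_swap3: "(\<Sum>a\<in>A. \<Sum>b\<in>B. \<Sum>c\<in>C. f a b c) = (\<Sum>c\<in>C. \<Sum>a\<in>A. \<Sum>b\<in>B. f a b c)"
proof -
  have "(\<Sum>a\<in>A. \<Sum>b\<in>B. \<Sum>c\<in>C. f a b c) = (\<Sum>a\<in>A. \<Sum>c\<in>C. \<Sum>b\<in>B. f a b c)"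
    by (rule sum.cong[OF refl], rule sum.swap)
  also have "\<dots> = (\<Sum>c\<in>C. \<Sum>a\<in>A. \<Sum>b\<in>B. f a b c)" by (rule sum.swap)
  finally show ?thesis .
qed

definition BOp :: "real \<Rightarrow> real \<Rightarrow> (nat \<Rightarrow> nat \<Rightarrow> nat \<Rightarrow> real) \<Rightarrow> (nat \<Rightarrow> nat \<Rightarrow> nat \<Rightarrow> letter list)
   \<Rightarrow> nat \<Rightarrow> (nat \<Rightarrow> real) \<Rightarrow> nat \<Rightarrow> real" where
  "BOp q th W B i psi m = (\<Sum>d\<in>{0,1::nat}. \<Sum>e\<in>{0,1::nat}. W i d e * opL q th (B i d e) psi m)"

fun Comp :: "real \<Rightarrow> real \<Rightarrow> (nat \<Rightarrow> nat \<Rightarrow> nat \<Rightarrow> real) \<Rightarrow> (nat \<Rightarrow> nat \<Rightarrow> nat \<Rightarrow> letter list)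
   \<Rightarrow> nat \<Rightarrow> (nat \<Rightarrow> real) \<Rightarrow> nat \<Rightarrow> real" where
  "Comp q th W B 0 psi = psi"
| "Comp q th W B (Suc n) psi = Comp q th W B n (BOp q th W B (Suc n) psi)"

fun Inn :: "real \<Rightarrow> real \<Rightarrow> (nat \<Rightarrow> nat \<Rightarrow> nat \<Rightarrow> real) \<Rightarrow> (nat \<Rightarrow> nat \<Rightarrow> nat \<Rightarrow> letter list)
   \<Rightarrow> nat \<Rightarrow> nat \<Rightarrow> nat \<Rightarrow> real" where
  "Inn q th W B tp 0 = d0"
| "Inn q th W B tp (Suc j) = BOp q th W B (tp - j) (Inn q th W B tp j)"

lemma Comp_Inn: "n \<le> tp \<Longrightarrow> Comp q th W B n (Inn q th W B tp (tp - n)) = Inn q th W B tp tp"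
proof (induction n)
  case 0 then show ?case by simp
next
  case (Suc n)
  have e: "tp - n = Suc (tp - Suc n)" using Suc.prems by simp
  have e2: "tp - (tp - Suc n) = Suc n" using Suc.prems by simp
  have "Inn q th W B tp (Suc (tp - Suc n)) = BOp q th W B (tp - (tp - Suc n)) (Inn q th W B tp (tp - Suc n))"
    by simp
  then have "Inn q th W B tp (tp - n) = BOp q th W B (Suc n) (Inn q th W B tp (tp - Suc n))"
    using e e2 by simp
  then show ?case using Suc by simp
qed

lemma G1:
  "(\<Sum>\<delta>\<in>Pi\<^sub>E {1..n} (\<lambda>_. {0,1::nat}). \<Sum>\<epsilon>\<in>Pi\<^sub>E {1..n} (\<lambda>_. {0,1::nat}).
      (\<Prod>i\<in>{1..n}. W i (\<delta> i) (\<epsilon> i)) * opL q th (concat (map (\<lambda>i. B i (\<delta> i) (\<epsilon> i)) [1..<n+1])) psi m)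
   = Comp q th W B n psi m"
proof (induction n arbitrary: psi m)
  case 0 then show ?case by simp
next
  case (Suc n)
  let ?P = "Pi\<^sub>E {1..n} (\<lambda>_. {0,1::nat})"
  have ins: "{1..Suc n} = insert (Suc n) {1..n}" by auto
  have nn: "Suc n \<notin> {1..n}" by simp
  have cw: "concat (map (\<lambda>i. B i ((\<delta>(Suc n := d)) i) ((\<epsilon>(Suc n := e)) i)) [1..<Suc n+1])
      = concat (map (\<lambda>i. B i (\<delta> i) (\<epsilon> i)) [1..<n+1]) @ B (Suc n) d e" for \<delta> \<epsilon> d e
  proof -
    have "map (\<lambda>i. B i ((\<delta>(Suc n := d)) i) ((\<epsilon>(Suc n := e)) i)) [1..<n+1] = map (\<lambda>i. B i (\<delta> i) (\<epsilon> i)) [1..<n+1]"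
      by (rule map_cong) auto
    moreover have u: "[1..<Suc n+1] = [1..<n+1] @ [Suc n]" by simp
    ultimately show ?thesis unfolding u by (simp only: map_append concat_append) simp
  qed
  have cp: "(\<Prod>i\<in>{1..Suc n}. W i ((\<delta>(Suc n := d)) i) ((\<epsilon>(Suc n := e)) i))
      = W (Suc n) d e * (\<Prod>i\<in>{1..n}. W i (\<delta> i) (\<epsilon> i))" for \<delta> \<epsilon> d e
  proof -
    have "(\<Prod>i\<in>{1..n}. W i ((\<delta>(Suc n := d)) i) ((\<epsilon>(Suc n := e)) i)) = (\<Prod>i\<in>{1..n}. W i (\<delta> i) (\<epsilon> i))"
      by (rule prod.cong) auto
    then show ?thesis by (simp add: ins)
  qed
  have "(\<Sum>\<delta>\<in>Pi\<^sub>E {1..Suc n} (\<lambda>_. {0,1::nat}). \<Sum>\<epsilon>\<in>Pi\<^sub>E {1..Suc n} (\<lambda>_. {0,1::nat}).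
      (\<Prod>i\<in>{1..Suc n}. W i (\<delta> i) (\<epsilon> i)) * opL q th (concat (map (\<lambda>i. B i (\<delta> i) (\<epsilon> i)) [1..<Suc n+1])) psi m)
    = (\<Sum>d\<in>{0,1}. \<Sum>\<delta>\<in>?P. \<Sum>e\<in>{0,1}. \<Sum>\<epsilon>\<in>?P.
         W (Suc n) d e * (\<Prod>i\<in>{1..n}. W i (\<delta> i) (\<epsilon> i)) *
         opL q th (concat (map (\<lambda>i. B i (\<delta> i) (\<epsilon> i)) [1..<n+1])) (opL q th (B (Suc n) d e) psi) m)"
    unfolding ins sum_PiE_ins[OF nn] by (simp only: ins[symmetric] cw cp opL_append)
  also have "\<dots> = (\<Sum>\<delta>\<in>?P. \<Sum>\<epsilon>\<in>?P. \<Sum>d\<in>{0,1}. \<Sum>e\<in>{0,1}.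
         (\<Prod>i\<in>{1..n}. W i (\<delta> i) (\<epsilon> i)) *
         opL q th (concat (map (\<lambda>i. B i (\<delta> i) (\<epsilon> i)) [1..<n+1])) (\<lambda>p. W (Suc n) d e * opL q th (B (Suc n) d e) psi p) m)"
    apply (rule trans[OF sum.swap]) apply (rule sum.cong, rule refl)
    apply (rule trans[OF sum_swap3])
    apply (rule sum.cong, rule refl)
    apply (rule sum.cong, rule refl)
    apply (rule sum.cong, rule refl)
    by (simp add: opL_scale)
  also have "\<dots> = (\<Sum>\<delta>\<in>?P. \<Sum>\<epsilon>\<in>?P.
         (\<Prod>i\<in>{1..n}. W i (\<delta> i) (\<epsilon> i)) *
         opL q th (concat (map (\<lambda>i. B i (\<delta> i) (\<epsilon> i)) [1..<n+1])) (BOp q th W B (Suc n) psi) m)"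
    unfolding BOp_def
    by (simp add: opL_sum sum_distrib_left del: insert_iff)
  also have "\<dots> = Comp q th W B (Suc n) psi m"
    using Suc by simp
  finally show ?case .
qed


definition gk :: "real \<Rightarrow> real \<Rightarrow> nat \<Rightarrow> nat \<Rightarrow> real" where
  "gk q th k m = q ^ ((k - 1) * m) / (qint q m ^ (k - 1) * (qint q m - th * q ^ m))"

fun Fk :: "real \<Rightarrow> real \<Rightarrow> nat list \<Rightarrow> nat \<Rightarrow> real" where
  "Fk q th [] m = d0 m"
| "Fk q th (k # ks) m = (if m = 0 then 0 else gk q th k m * (\<Sum>p<m. Fk q th ks p))"

definition Sset :: "nat \<Rightarrow> nat list set" where
  "Sset n = {ms. length ms = n \<and> sorted_wrt (>) ms \<and> (\<forall>m\<in>set ms. 0 < m)}"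

definition AN :: "nat \<Rightarrow> nat \<Rightarrow> nat list set" where
  "AN n N = {ms \<in> Sset n. \<forall>m\<in>set ms. m < N}"

lemma gk_Suc: "gk q th (Suc c) m = Xw q m ^ c * Tw q th m"
proof -
  have "q ^ (c * m) = (q ^ m) ^ c" by (simp add: power_mult[symmetric] mult.commute)
  then show ?thesis by (simp add: gk_def Xw_def Tw_def power_divide)
qed

lemma word_F: "w \<noteq> [] \<Longrightarrow> last w = LY \<Longrightarrow> Xw q m ^ c * opL q th w d0 m = Fk q th (word_ks_aux c w) m"
proof (induction w arbitrary: c m)
  case Nil then show ?case by simp
next
  case (Cons l w)
  show ?case
  proof (cases l)
    case LX
    have "w \<noteq> []" using Cons.prems LX by auto
    then have "w \<noteq> []" "last w = LY" using Cons.prems by auto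
    then show ?thesis using Cons.IH[where c="Suc c" and m=m] LX by (simp add: mult_ac)
  next
    case LY
    show ?thesis
    proof (cases "w = []")
      case True
      then show ?thesis using LY by (simp add: Yop_def gk_Suc mult_ac)
    next
      case False
      have "last w = LY" using Cons.prems False by auto
      then have "opL q th w d0 p = Fk q th (word_ks_aux 0 w) p" for p
        using Cons.IH[where c=0 and m=p] False by simp
      then show ?thesis using LY by (simp add: Yop_def gk_Suc mult_ac)
    qed
  qed
qed

lemma finite_AN: "finite (AN n N)"
proof -
  have "AN n N \<subseteq> {ms. set ms \<subseteq> {..<N} \<and> length ms = n}"
    unfolding AN_def Sset_def by auto
  moreover have "finite {ms. set ms \<subseteq> {..<N} \<and> length ms = n}"
    by (rule finite_lists_length_eq) simp
  ultimately show ?thesis by (rule finite_subset)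
qed

lemma AN_Suc: "AN (Suc n) N = (\<lambda>(m, t). m # t) ` (SIGMA m:{1..<N}. AN n m)"
proof (intro equalityI subsetI)
  fix ms assume "ms \<in> AN (Suc n) N"
  then obtain m t where ms: "ms = m # t" and t: "length t = n"
    unfolding AN_def Sset_def by (auto simp: length_Suc_conv)
  then have "(m, t) \<in> (SIGMA m:{1..<N}. AN n m)"
    using \<open>ms \<in> AN (Suc n) N\<close> unfolding AN_def Sset_def by auto
  then show "ms \<in> (\<lambda>(m, t). m # t) ` (SIGMA m:{1..<N}. AN n m)"
    using ms by force
next
  fix ms assume "ms \<in> (\<lambda>(m, t). m # t) ` (SIGMA m:{1..<N}. AN n m)"
  then show "ms \<in> AN (Suc n) N" unfolding AN_def Sset_def by (fastforce intro: less_trans)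
qed

lemma sum_lt_drop0: "f 0 = 0 \<Longrightarrow> (\<Sum>m<N. f m) = (\<Sum>m\<in>{1..<N::nat}. f m)"
proof (rule sum.mono_neutral_right)
  assume f0: "f 0 = 0"
  show "\<forall>i\<in>{..<N} - {1..<N}. f i = 0"
  proof
    fix i assume "i \<in> {..<N} - {1..<N}"
    then have "i < N \<and> \<not> (1 \<le> i \<and> i < N)" by auto
    then have "i = 0" by arith
    then show "f i = 0" using f0 by simp
  qed
qed auto

lemma sumA: "1 \<le> N \<Longrightarrow>
  (\<Sum>ms\<in>AN (length ks) N. \<Prod>j<length ks. gk q th (ks ! j) (ms ! j)) = (\<Sum>m<N. Fk q th ks m)"
proof (induction ks arbitrary: N)
  case Nil
  have "AN 0 N = {[]}" unfolding AN_def Sset_def by auto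
  then show ?case using Nil by (simp add: d0_def sum.delta' lessThan_def)
next
  case (Cons k ks)
  let ?n = "length ks"
  have inj: "inj_on (\<lambda>(m, t). m # t) (SIGMA m:{1..<N}. AN ?n m)"
    by (auto simp: inj_on_def)
  have "(\<Sum>ms\<in>AN (length (k # ks)) N. \<Prod>j<length (k # ks). gk q th ((k # ks) ! j) (ms ! j))
      = sum ((\<lambda>ms. \<Prod>j<Suc ?n. gk q th ((k # ks) ! j) (ms ! j)) \<circ> (\<lambda>(m, t). m # t)) (SIGMA m:{1..<N}. AN ?n m)"
    by (simp only: length_Cons AN_Suc sum.reindex[OF inj])
  also have "\<dots> = (\<Sum>(m, t)\<in>(SIGMA m:{1..<N}. AN ?n m). \<Prod>j<Suc ?n. gk q th ((k # ks) ! j) ((m # t) ! j))"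
    by (rule sum.cong) auto
  also have "\<dots> = (\<Sum>m\<in>{1..<N}. \<Sum>t\<in>AN ?n m. \<Prod>j<Suc ?n. gk q th ((k # ks) ! j) ((m # t) ! j))"
    by (rule sum.Sigma[symmetric]) (auto simp: finite_AN)
  also have "\<dots> = (\<Sum>m\<in>{1..<N}. gk q th k m * (\<Sum>t\<in>AN ?n m. \<Prod>j<?n. gk q th (ks ! j) (t ! j)))"
    by (simp add: prod.lessThan_Suc_shift sum_distrib_left del: prod.lessThan_Suc)
  also have "\<dots> = (\<Sum>m\<in>{1..<N}. gk q th k m * (\<Sum>p<m. Fk q th ks p))"
    using Cons.IH by (intro sum.cong) auto
  also have "\<dots> = (\<Sum>m<N. Fk q th (k # ks) m)"
    by (subst sum_lt_drop0) (auto intro!: sum.cong)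
  finally show ?case .
qed


context
  fixes q :: real assumes q0: "0 < q" and q1: "q < 1"
begin

lemma gk_nonneg: "good q th k \<Longrightarrow> 1 \<le> m \<Longrightarrow> 0 \<le> gk q th kk m"
  unfolding gk_def using qint_nonneg[OF q0 q1] good_Tw_pos[OF q0 q1, of th k m] q0
  by (auto simp: Tw_def intro!: divide_nonneg_pos mult_nonneg_nonneg mult_pos_pos)

lemma Fk_nonneg: "good q th k \<Longrightarrow> 0 \<le> Fk q th ks m"
  by (induction ks arbitrary: m) (auto simp: d0_def intro!: mult_nonneg_nonneg sum_nonneg gk_nonneg)

lemma bridge:
  assumes g: "good q th k" and w: "w \<noteq> []" "last w = LY"
    and V: "(\<lambda>m. opL q th w d0 m) sums V"
  shows "fq q w (complex_of_real th) = complex_of_real V"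
proof -
  define ks where "ks = word_ks w"
  define n where "n = length ks"
  define G where "G = (\<lambda>ms. \<Prod>j<n. gk q th (ks ! j) (ms ! j))"
  have opF: "opL q th w d0 m = Fk q th ks m" for m
    using word_F[OF w, where c=0 and m=m and q=q and th=th] by (simp add: ks_def word_ks_def)
  have FV: "(\<lambda>m. Fk q th ks m) sums V" using V opF by simp
  have Gnn: "0 \<le> G ms" if "ms \<in> Sset n" for ms
  proof -
    have "0 < ms ! j" if "j < n" for j using \<open>ms \<in> Sset n\<close> that unfolding Sset_def by auto
    then show ?thesis unfolding G_def using g by (auto intro!: prod_nonneg gk_nonneg simp: Suc_le_eq)
  qed
  have sumAN: "sum G (AN n N) = (\<Sum>m<N. Fk q th ks m)" if "1 \<le> N" for N
    using sumA[OF that, where ks=ks and q=q and th=th] by (simp add: G_def n_def)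
  have leV: "(\<Sum>m<N. Fk q th ks m) \<le> V" for N
    using sum_le_suminf[of "\<lambda>m. Fk q th ks m" "{..<N}"] FV Fk_nonneg[OF g]
    by (auto simp: sums_iff)
  have sub: "\<exists>N. 1 \<le> N \<and> F \<subseteq> AN n N" if "finite F" "F \<subseteq> Sset n" for F
  proof -
    define M where "M = Max (insert 0 (\<Union>(set ` F)))"
    have fin: "finite (insert 0 (\<Union>(set ` F)))" using \<open>finite F\<close> by simp
    have Mge: "m \<le> M" if "ms \<in> F" "m \<in> set ms" for ms m
    proof -
      have "m \<in> insert 0 (\<Union>(set ` F))" using that by blast
      then show ?thesis unfolding M_def by (rule Max_ge[OF fin])
    qed
    have "F \<subseteq> AN n (Suc M)"
    proof
      fix ms assume ms: "ms \<in> F"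
      have "ms \<in> Sset n" using subsetD[OF \<open>F \<subseteq> Sset n\<close> ms] .
      moreover have "\<forall>m\<in>set ms. m < Suc M" using Mge[OF ms] by (simp add: less_Suc_eq_le)
      ultimately show "ms \<in> AN n (Suc M)" unfolding AN_def by simp
    qed
    then show ?thesis by (intro exI[of _ "Suc M"]) simp
  qed
  have Fle: "sum G F \<le> V" if FF: "finite F" "F \<subseteq> Sset n" for F
  proof -
    obtain N where N0: "1 \<le> N \<and> F \<subseteq> AN n N" using sub[OF FF] by (rule exE)
    then have N: "1 \<le> N" "F \<subseteq> AN n N" by simp_all
    have "sum G F \<le> sum G (AN n N)"
    proof (rule sum_mono2[OF finite_AN N(2)])
      fix b assume "b \<in> AN n N - F"
      then have "b \<in> Sset n" by (simp add: AN_def)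
      then show "0 \<le> G b" by (rule Gnn)
    qed
    also have "\<dots> \<le> V" using sumAN[OF N(1)] leV[of N] by linarith
    finally show ?thesis .
  qed
  have bdd: "bdd_above (sum G ` {F. F \<subseteq> Sset n \<and> finite F})"
    by (rule bdd_aboveI[where M=V]) (use Fle in blast)
  have summ: "G summable_on Sset n"
    by (rule nonneg_bdd_above_summable_on[OF _ bdd]) (use Gnn in blast)
  have le1: "infsum G (Sset n) \<le> V"
    by (rule infsum_le_finite_sums[OF summ]) (rule Fle)
  have lim: "(\<lambda>N. sum G (AN n (Suc N))) \<longlonglongrightarrow> V"
  proof -
    have "(\<lambda>N. \<Sum>m<N. Fk q th ks m) \<longlonglongrightarrow> V" using FV by (simp add: sums_def)
    then have "(\<lambda>N. \<Sum>m<Suc N. Fk q th ks m) \<longlonglongrightarrow> V" by (rule LIMSEQ_Suc)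
    then show ?thesis using sumAN by simp
  qed
  have le2: "V \<le> infsum G (Sset n)"
  proof (rule LIMSEQ_le_const2[OF lim])
    show "\<exists>N0. \<forall>N\<ge>N0. sum G (AN n (Suc N)) \<le> infsum G (Sset n)"
    proof (intro exI[of _ 0] allI impI finite_sum_le_infsum[OF summ finite_AN])
      fix N :: nat
      show "AN n (Suc N) \<subseteq> Sset n" by (auto simp: AN_def)
      fix x assume "x \<in> Sset n - AN n (Suc N)"
      then show "0 \<le> G x" using Gnn by blast
    qed
  qed
  have hs: "(G has_sum V) (Sset n)" using summ le1 le2 by (simp add: has_sum_iff)
  have hsc: "((\<lambda>ms. complex_of_real (G ms)) has_sum complex_of_real V) (Sset n)"
    by (rule has_sum_of_real[OF hs])
  have eqf: "(\<lambda>ms. \<Prod>j<n. complex_of_real (q ^ ((ks ! j - 1) * (ms ! j))) /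
                 (complex_of_real (qint q (ms ! j)) ^ (ks ! j - 1) *
                  (complex_of_real (qint q (ms ! j)) - complex_of_real th * complex_of_real (q ^ (ms ! j)))))
      = (\<lambda>ms. complex_of_real (G ms))"
    by (simp add: G_def gk_def)
  show ?thesis
    unfolding fq_def Let_def ks_def[symmetric] n_def[symmetric] eqf
    using hsc by (simp add: Sset_def infsumI)
qed

end


definition Sb :: "(nat \<Rightarrow> real) \<Rightarrow> nat \<Rightarrow> real" where "Sb f m = (\<Sum>p\<le>m. f p)"
definition Ss :: "(nat \<Rightarrow> real) \<Rightarrow> nat \<Rightarrow> real" where "Ss f m = (\<Sum>p<m. f p)"
definition SY :: "real \<Rightarrow> real \<Rightarrow> (nat \<Rightarrow> real) \<Rightarrow> nat \<Rightarrow> real" where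
  "SY q t f m = (\<Sum>p<m. Tw q t p * f p)"
definition Kop :: "real \<Rightarrow> real \<Rightarrow> nat \<Rightarrow> (nat \<Rightarrow> real) \<Rightarrow> nat \<Rightarrow> real" where
  "Kop q t k f m = zw q m * (SY q t ^^ (k - 1)) (Sb f) m"
definition Klast :: "real \<Rightarrow> real \<Rightarrow> nat \<Rightarrow> (nat \<Rightarrow> real) \<Rightarrow> nat \<Rightarrow> real" where
  "Klast q t k f m = (if 2 \<le> k then Kop q t k f m else zw q m * Ss f m)"
definition cw :: "real \<Rightarrow> real \<Rightarrow> nat \<Rightarrow> nat \<Rightarrow> real" where
  "cw q t d e = t ^ ((1 - d) * (1 - e)) * (1 - q) ^ (d * e)"

lemma Yop_Ss: "Yop q t g p = Tw q t p * Ss g p"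
  by (simp add: Yop_def Ss_def)

lemma SY_scale: "SY q t (\<lambda>p. c * f p) m = c * SY q t f m"
  by (simp add: SY_def sum_distrib_left mult_ac)

lemma SYk_scale: "(SY q t ^^ k) (\<lambda>p. c * f p) m = c * (SY q t ^^ k) f m"
proof (induction k arbitrary: m)
  case 0 then show ?case by simp
next
  case (Suc k)
  have "(SY q t ^^ k) (\<lambda>p. c * f p) = (\<lambda>m. c * (SY q t ^^ k) f m)" using Suc by auto
  then show ?case by (simp add: SY_scale)
qed

lemma Sb_scale: "Sb (\<lambda>p. c * f p) = (\<lambda>m. c * Sb f m)"
  by (auto simp: Sb_def sum_distrib_left)

lemma Kop_scale: "Kop q t k (\<lambda>p. c * f p) m = c * Kop q t k f m"
  by (simp add: Kop_def Sb_scale SYk_scale)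

lemma Klast_scale: "Klast q t k (\<lambda>p. c * f p) m = c * Klast q t k f m"
  by (simp add: Klast_def Kop_scale Ss_def sum_distrib_left mult_ac)

lemma Kop_0[simp]: "Kop q t k f 0 = 0" by (simp add: Kop_def)
lemma Klast_0[simp]: "Klast q t k f 0 = 0" by (simp add: Klast_def)

lemma Sb_Ss: "Sb f m = Ss f m + f m"
  by (simp add: Sb_def Ss_def lessThan_Suc_atMost[symmetric])

lemma Ss_Suc: "Ss f (Suc m) = Sb f m"
  by (simp add: Sb_def Ss_def lessThan_Suc_atMost)

lemma Yopk_Ss: "(Yop q t ^^ Suc k) g = (\<lambda>p. Tw q t p * Ss ((Yop q t ^^ k) g) p)"
  by (auto simp: Yop_Ss)

lemma L6: "Ss (Yop q t g) = SY q t (Ss g)"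
  by (auto simp: Ss_def SY_def Yop_Ss intro!: ext)

lemma L6k: "Ss ((Yop q t ^^ k) g) = (SY q t ^^ k) (Ss g)"
  by (induction k) (auto simp: L6)

context
  fixes q :: real assumes q0: "0 < q" and q1: "q < 1"
begin

lemma L5: "Sb (Yop q th f) m = SY q (q * th - 1) (Sb f) m"
proof (induction m)
  case 0 then show ?case by (simp add: Sb_def SY_def)
next
  case (Suc m)
  have "Sb (Yop q th f) (Suc m) = Sb (Yop q th f) m + Tw q th (Suc m) * Sb f m"
    by (simp add: Sb_def Yop_def lessThan_Suc_atMost)
  also have "\<dots> = SY q (q * th - 1) (Sb f) (Suc m)"
    using Suc by (simp add: SY_def L4[OF q0 q1])
  finally show ?case .
qed

lemma L5k: "Sb ((Yop q th ^^ k) f) = (SY q (q * th - 1) ^^ k) (Sb f)"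
proof (induction k)
  case 0 then show ?case by simp
next
  case (Suc k)
  have "Sb ((Yop q th ^^ Suc k) f) = SY q (q * th - 1) (Sb ((Yop q th ^^ k) f))"
    by (auto simp: L5 intro!: ext)
  then show ?case using Suc by simp
qed

lemma core1:
  assumes g: "good q th kk" and phi0: "phi 0 = 0"
  shows "(- th) * Xw q m * Yop q th phi m + Xw q m * phi m + Yop q th phi m + (1 - q) * phi m
       = zw q m * Sb phi m"
proof (cases "m = 0")
  case True then show ?thesis using phi0 by (simp add: Sb_def)
next
  case False
  then have m1: "1 \<le> m" by simp
  have "(- th) * Xw q m * Yop q th phi m + Yop q th phi m = (1 - th * Xw q m) * Tw q th m * Ss phi m"
    using False by (simp add: Yop_Ss algebra_simps)
  also have "\<dots> = zw q m * Ss phi m" using L2[OF q0 q1 g m1] by simp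
  finally have A: "(- th) * Xw q m * Yop q th phi m + Yop q th phi m = zw q m * Ss phi m" .
  have "Xw q m * phi m + (1 - q) * phi m = (Xw q m + (1 - q)) * phi m" by (simp add: algebra_simps)
  then have B: "Xw q m * phi m + (1 - q) * phi m = zw q m * phi m"
    using L3[OF q0 q1 m1] by simp
  show ?thesis using A B by (simp add: Sb_Ss algebra_simps)
qed

lemma F1:
  assumes g: "good q th kk" and a: "1 \<le> a" and b: "1 \<le> b"
    and phi0: "(Yop q th ^^ (b - 1)) psi 0 = 0"
  shows "(\<Sum>d\<in>{0,1::nat}. \<Sum>e\<in>{0,1::nat}. cw q (- th) d e *
            opL q th (replicate (a - d) LX @ replicate (b - e) LY) psi m)
       = Xw q m ^ (a - 1) * Kop q (q * th - 1) b psi m"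
proof -
  define phi where "phi = (Yop q th ^^ (b - 1)) psi"
  have ea: "a - 0 = Suc (a - 1)" using a by simp
  have eb: "b - 0 = Suc (b - 1)" using b by simp
  have Y: "(Yop q th ^^ b) psi = Yop q th phi" using eb unfolding phi_def by (metis diff_zero funpow.simps(2) o_apply)
  have Y1: "(Yop q th ^^ (b - Suc 0)) psi = phi" unfolding phi_def by simp
  have Xa: "Xw q m ^ a = Xw q m * Xw q m ^ (a - 1)" using ea by (metis diff_zero power_Suc)
  have "(\<Sum>d\<in>{0,1::nat}. \<Sum>e\<in>{0,1::nat}. cw q (- th) d e *
            opL q th (replicate (a - d) LX @ replicate (b - e) LY) psi m)
      = Xw q m ^ (a - 1) * ((- th) * Xw q m * Yop q th phi m + Xw q m * phi m + Yop q th phi m + (1 - q) * phi m)"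
    unfolding opL_blk by (simp add: cw_def Y Y1 Xa algebra_simps)
  also have "\<dots> = Xw q m ^ (a - 1) * (zw q m * Sb phi m)"
    using core1[OF g] phi0 by (simp add: phi_def)
  also have "\<dots> = Xw q m ^ (a - 1) * Kop q (q * th - 1) b psi m"
    by (simp add: Kop_def phi_def L5k)
  finally show ?thesis .
qed

lemma F2:
  assumes g: "good q th kk" and a: "1 \<le> a"
  shows "(\<Sum>d\<in>{0,1::nat}. cw q (- th) d 0 *
            opL q th (replicate (a - d) LX @ replicate 1 LY) psi m)
       = Xw q m ^ (a - 1) * (zw q m * Ss psi m)"
proof (cases "m = 0")
  case True then show ?thesis by (simp add: opL_repX)
next
  case False
  then have m1: "1 \<le> m" by simp
  have ea: "a - 0 = Suc (a - 1)" using a by simp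
  have Xa: "Xw q m ^ a = Xw q m * Xw q m ^ (a - 1)" using ea by (metis diff_zero power_Suc)
  have "(\<Sum>d\<in>{0,1::nat}. cw q (- th) d 0 * opL q th (replicate (a - d) LX @ replicate 1 LY) psi m)
      = Xw q m ^ (a - 1) * ((1 - th * Xw q m) * Tw q th m * Ss psi m)"
    using False by (simp add: opL_repX cw_def Xa Yop_Ss algebra_simps)
  then show ?thesis using L2[OF q0 q1 g m1] by simp
qed

end


definition WL :: "(nat \<Rightarrow> nat) \<Rightarrow> (nat \<Rightarrow> nat) \<Rightarrow> nat \<Rightarrow> real \<Rightarrow> real \<Rightarrow> nat \<Rightarrow> nat \<Rightarrow> nat \<Rightarrow> real" where
  "WL a b s q th i d e = cw q (- th) d e * (if i = 1 \<and> \<not> d < a 1 then 0 else 1) * (if i = s \<and> \<not> e < b s then 0 else 1)"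

definition BL :: "(nat \<Rightarrow> nat) \<Rightarrow> (nat \<Rightarrow> nat) \<Rightarrow> nat \<Rightarrow> nat \<Rightarrow> nat \<Rightarrow> letter list" where
  "BL a b i d e = replicate (a i - d) LX @ replicate (b i - e) LY"

definition WR :: "(nat \<Rightarrow> nat) \<Rightarrow> (nat \<Rightarrow> nat) \<Rightarrow> nat \<Rightarrow> real \<Rightarrow> real \<Rightarrow> nat \<Rightarrow> nat \<Rightarrow> nat \<Rightarrow> real" where
  "WR a b s q t i d e = cw q (- t) d e * (if i = s + 1 \<and> d \<noteq> 0 then 0 else 1) * (if i = 1 \<and> e \<noteq> 0 then 0 else 1)
     * (if i = 1 \<and> \<not> d < a 1 then 0 else 1) * (if i = s + 1 \<and> \<not> e < b s then 0 else 1)"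

definition BR :: "(nat \<Rightarrow> nat) \<Rightarrow> (nat \<Rightarrow> nat) \<Rightarrow> nat \<Rightarrow> nat \<Rightarrow> nat \<Rightarrow> nat \<Rightarrow> letter list" where
  "BR a b s i d e = replicate (if 2 \<le> i then b (i - 1) - e else 0) LY @ replicate (if i \<le> s then a i - d else 0) LX"

definition bfun :: "real \<Rightarrow> real \<Rightarrow> nat \<Rightarrow> real" where "bfun q t m = 1 - t * Xw q m"

definition Qf :: "real \<Rightarrow> real \<Rightarrow> (nat \<Rightarrow> real) \<Rightarrow> nat \<Rightarrow> real" where
  "Qf q t phi p = (- t) * Yop q t (\<lambda>r. Xw q r * phi r) p + Xw q p * phi p + Yop q t phi p + (1 - q) * phi p"

lemma bfun_0[simp]: "bfun q t 0 = 1" by (simp add: bfun_def)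

lemma funpow_Suc_app: "(f ^^ Suc k) x = (f ^^ k) (f x)"
  by (simp add: funpow_Suc_right del: funpow.simps)

lemma sum01: "(\<Sum>d\<in>{0,1::nat}. \<Sum>e\<in>{0,1::nat}. F d e) = F 0 0 + F 0 1 + F 1 0 + F 1 1"
  by (simp add: add.assoc)

lemma cw_00[simp]: "cw q t 0 0 = t" and cw_01[simp]: "cw q t 0 1 = 1"
  and cw_10[simp]: "cw q t 1 0 = 1" and cw_11[simp]: "cw q t 1 1 = 1 - q"
  by (simp_all add: cw_def)

lemma cw_01'[simp]: "cw q t 0 (Suc 0) = 1" and cw_10'[simp]: "cw q t (Suc 0) 0 = 1"
  and cw_11'[simp]: "cw q t (Suc 0) (Suc 0) = 1 - q"
  by (simp_all add: cw_def)

context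
  fixes q :: real assumes q0: "0 < q" and q1: "q < 1"
begin

lemma R1: assumes g: "good q t kt" shows "bfun q t m * Yop q t h m = zw q m * Ss h m"
proof (cases "m = 0")
  case True then show ?thesis by (simp add: Ss_def)
next
  case False
  then have "1 \<le> m" by simp
  from L2[OF q0 q1 g this] show ?thesis by (simp add: bfun_def Yop_Ss)
qed

lemma R2: assumes g: "good q t kt" and k: "1 \<le> k"
  shows "bfun q t m * (Yop q t ^^ k) h m = zw q m * (SY q t ^^ (k - 1)) (Ss h) m"
proof -
  obtain j where j: "k = Suc j" using k by (cases k) auto
  have "bfun q t m * (Yop q t ^^ k) h m = zw q m * Ss ((Yop q t ^^ j) h) m"
    using R1[OF g] j by simp
  then show ?thesis using j by (simp add: L6k)
qed

lemma R3: assumes g: "good q t kt" and phi0: "phi 0 = 0"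
  shows "Ss (Qf q t phi) m = SY q t (Sb (\<lambda>p. bfun q t p * phi p)) m"
proof -
  have Qe: "Qf q t phi p = Yop q t (\<lambda>r. bfun q t r * phi r) p + zw q p * phi p" for p
  proof (cases "p = 0")
    case True then show ?thesis using phi0 by (simp add: Qf_def)
  next
    case False
    then have p1: "1 \<le> p" by simp
    have "Yop q t (\<lambda>r. bfun q t r * phi r) p = (- t) * Yop q t (\<lambda>r. Xw q r * phi r) p + Yop q t phi p"
      unfolding bfun_def by (simp add: algebra_simps Yop_add[symmetric] Yop_scale[symmetric])
    moreover have "zw q p * phi p = Xw q p * phi p + (1 - q) * phi p"
      using L3[OF q0 q1 p1] by (simp add: distrib_right)
    ultimately show ?thesis by (simp add: Qf_def)
  qed
  have Z: "zw q p * phi p = Tw q t p * (bfun q t p * phi p)" for p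
  proof (cases "p = 0")
    case True then show ?thesis using phi0 by simp
  next
    case False
    then have "1 \<le> p" by simp
    from L2[OF q0 q1 g this] show ?thesis by (simp add: bfun_def mult_ac)
  qed
  have "Ss (Qf q t phi) m = Ss (Yop q t (\<lambda>r. bfun q t r * phi r)) m + (\<Sum>p<m. zw q p * phi p)"
    by (simp add: Ss_def Qe sum.distrib)
  also have "\<dots> = SY q t (Ss (\<lambda>r. bfun q t r * phi r)) m + (\<Sum>p<m. Tw q t p * (bfun q t p * phi p))"
    by (simp add: L6 Z)
  also have "\<dots> = SY q t (Sb (\<lambda>p. bfun q t p * phi p)) m"
    by (simp add: SY_def Sb_Ss sum.distrib algebra_simps)
  finally show ?thesis .
qed

lemma core3: assumes g: "good q t kt" and phi0: "phi 0 = 0"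
  shows "bfun q t m * (Yop q t ^^ k) (Qf q t phi) m = zw q m * (SY q t ^^ k) (Sb (\<lambda>p. bfun q t p * phi p)) m"
proof (cases k)
  case 0
  show ?thesis
  proof (cases "m = 0")
    case True then show ?thesis using 0 phi0 by (simp add: Qf_def)
  next
    case False
    then have m1: "1 \<le> m" by simp
    have f1: "Yop q t (\<lambda>r. bfun q t r * phi r) m = (- t) * Yop q t (\<lambda>r. Xw q r * phi r) m + Yop q t phi m"
      unfolding bfun_def by (simp add: algebra_simps Yop_add[symmetric] Yop_scale[symmetric])
    have f2: "zw q m * phi m = Xw q m * phi m + (1 - q) * phi m"
      using L3[OF q0 q1 m1] by (simp add: distrib_right)
    have Qm: "Qf q t phi m = Yop q t (\<lambda>r. bfun q t r * phi r) m + zw q m * phi m"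
      unfolding Qf_def using f1 f2 by linarith
    have "bfun q t m * Qf q t phi m = zw q m * Ss (\<lambda>r. bfun q t r * phi r) m + zw q m * (bfun q t m * phi m)"
      unfolding Qm distrib_left R1[OF g] by (simp add: mult_ac)
    also have "\<dots> = zw q m * Sb (\<lambda>p. bfun q t p * phi p) m"
      by (simp add: Sb_Ss algebra_simps)
    finally show ?thesis using 0 by simp
  qed
next
  case (Suc j)
  have "bfun q t m * (Yop q t ^^ k) (Qf q t phi) m = zw q m * (SY q t ^^ j) (Ss (Qf q t phi)) m"
    using R2[OF g, of k] Suc by simp
  also have "Ss (Qf q t phi) = SY q t (Sb (\<lambda>p. bfun q t p * phi p))"
    using R3[OF g, where phi=phi, OF phi0] by auto
  finally show ?thesis using Suc by (simp add: funpow_swap1)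
qed

lemma expandQ:
  assumes A: "1 \<le> A" and B: "1 \<le> B"
  shows "(\<Sum>d\<in>{0,1::nat}. \<Sum>e\<in>{0,1::nat}. cw q (- t) d e *
            (Yop q t ^^ (B - e)) (\<lambda>p. Xw q p ^ (A - d) * psi p) m)
       = (Yop q t ^^ (B - 1)) (Qf q t (\<lambda>p. Xw q p ^ (A - 1) * psi p)) m"
proof -
  define phi where "phi = (\<lambda>p. Xw q p ^ (A - 1) * psi p)"
  obtain A' where A': "A = Suc A'" using A by (cases A) auto
  obtain B' where B': "B = Suc B'" using B by (cases B) auto
  have XA: "(\<lambda>p. Xw q p ^ A * psi p) = (\<lambda>p. Xw q p * phi p)"
    unfolding phi_def A' by (auto intro!: ext)
  have YB: "(Yop q t ^^ B) f = (Yop q t ^^ B') (Yop q t f)" for f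
    unfolding B' by (rule funpow_Suc_app)
  have e1: "B - 1 = B'" "A - 1 = A'" using A' B' by simp_all
  have phiA: "(\<lambda>p. Xw q p ^ A' * psi p) = phi" unfolding phi_def e1 ..
  have "(\<Sum>d\<in>{0,1::nat}. \<Sum>e\<in>{0,1::nat}. cw q (- t) d e *
            (Yop q t ^^ (B - e)) (\<lambda>p. Xw q p ^ (A - d) * psi p) m)
      = (- t) * (Yop q t ^^ B) (\<lambda>p. Xw q p ^ A * psi p) m
        + (Yop q t ^^ (B - 1)) (\<lambda>p. Xw q p ^ A * psi p) m
        + (Yop q t ^^ B) (\<lambda>p. Xw q p ^ (A - 1) * psi p) m
        + (1 - q) * (Yop q t ^^ (B - 1)) (\<lambda>p. Xw q p ^ (A - 1) * psi p) m"
    by (simp only: sum01 cw_00 cw_01 cw_10 cw_11 diff_zero mult_1_left)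
  also have "\<dots> = (- t) * (Yop q t ^^ B') (Yop q t (\<lambda>p. Xw q p * phi p)) m
        + (Yop q t ^^ B') (\<lambda>p. Xw q p * phi p) m
        + (Yop q t ^^ B') (Yop q t phi) m + (1 - q) * (Yop q t ^^ B') phi m"
    by (simp only: XA YB e1 phiA)
  also have "\<dots> = (Yop q t ^^ B') (Qf q t phi) m"
    unfolding Qf_def by (simp only: Yopk_add Yopk_scale)
  finally show ?thesis unfolding phi_def e1 .
qed

end


lemma Sb_d0[simp]: "Sb d0 p = 1"
  by (simp add: Sb_def d0_def)

lemma Ss_d0: "Ss d0 p = (if p = 0 then 0 else 1)"
  by (simp add: Ss_def d0_def)

context
  fixes q :: real assumes q0: "0 < q" and q1: "q < 1"
begin

lemma BOpL:
  assumes g: "good q th kk" and i: "1 \<le> i" "i \<le> s" and ai: "1 \<le> a i" and bi: "1 \<le> b i"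
    and a1: "i = 1 \<Longrightarrow> 2 \<le> a 1"
    and ph: "(i = s \<and> b s = 1) \<or> (Yop q th ^^ (b i - 1)) psi 0 = 0"
  shows "BOp q th (WL a b s q th) (BL a b) i psi m
       = Xw q m ^ (a i - 1) * (if i = s then Klast q (q * th - 1) (b s) psi m else Kop q (q * th - 1) (b i) psi m)"
proof -
  have ind1: "(if i = 1 \<and> \<not> d < a 1 then 0 else 1) = (1::real)" if "d \<le> 1" for d
    using a1 that by auto
  define T where "T d e = opL q th (BL a b i d e) psi m" for d e
  have B: "BOp q th (WL a b s q th) (BL a b) i psi m
      = WL a b s q th i 0 0 * T 0 0 + WL a b s q th i 0 1 * T 0 1 + WL a b s q th i 1 0 * T 1 0 + WL a b s q th i 1 1 * T 1 1"
    unfolding BOp_def T_def by (simp only: sum01)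
  show ?thesis
  proof (cases "i = s \<and> b s = 1")
    case True
    have W: "WL a b s q th i d 0 = cw q (- th) d 0" "WL a b s q th i d 1 = 0" if "d \<le> 1" for d
      unfolding WL_def using ind1[OF that] True by auto
    have bi1: "b i = 1" using True by simp
    have "BOp q th (WL a b s q th) (BL a b) i psi m
        = (\<Sum>d\<in>{0,1::nat}. cw q (- th) d 0 * opL q th (replicate (a i - d) LX @ replicate 1 LY) psi m)"
      unfolding B using W[of 0] W[of 1] by (simp add: T_def BL_def bi1)
    also have "\<dots> = Xw q m ^ (a i - 1) * (zw q m * Ss psi m)" by (rule F2[OF q0 q1 g ai])
    finally show ?thesis using True by (simp add: Klast_def)
  next
    case False
    have ind2: "(if i = s \<and> \<not> e < b s then 0 else 1) = (1::real)" if "e \<le> 1" for e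
      using False bi that by auto
    have W: "WL a b s q th i d e = cw q (- th) d e" if "d \<le> 1" "e \<le> 1" for d e
      unfolding WL_def using ind1[OF that(1)] ind2[OF that(2)] by simp
    have phi0: "(Yop q th ^^ (b i - 1)) psi 0 = 0" using ph False by blast
    have "BOp q th (WL a b s q th) (BL a b) i psi m
        = (\<Sum>d\<in>{0,1::nat}. \<Sum>e\<in>{0,1::nat}. cw q (- th) d e *
            opL q th (replicate (a i - d) LX @ replicate (b i - e) LY) psi m)"
      unfolding B sum01 using W[of 0 0] W[of 0 1] W[of 1 0] W[of 1 1] by (simp add: T_def BL_def)
    also have "\<dots> = Xw q m ^ (a i - 1) * Kop q (q * th - 1) (b i) psi m"
      by (rule F1[OF q0 q1 g ai bi phi0])
    finally show ?thesis using False bi by (auto simp: Klast_def)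
  qed
qed

lemma BOpR_mid:
  assumes g: "good q t kt" and i: "2 \<le> i" "i \<le> s" and ai: "1 \<le> a i" and bi: "1 \<le> b (i - 1)"
    and ph: "Xw q 0 ^ (a i - 1) * psi 0 = 0"
  shows "bfun q t m * BOp q t (WR a b s q t) (BR a b s) i psi m
       = Kop q t (b (i - 1)) (\<lambda>p. bfun q t p * (Xw q p ^ (a i - 1) * psi p)) m"
proof -
  have W: "WR a b s q t i d e = cw q (- t) d e" for d e
    unfolding WR_def using i by auto
  have Br: "BR a b s i d e = replicate (b (i - 1) - e) LY @ replicate (a i - d) LX" for d e
    unfolding BR_def using i by auto
  have "BOp q t (WR a b s q t) (BR a b s) i psi m
      = (\<Sum>d\<in>{0,1::nat}. \<Sum>e\<in>{0,1::nat}. cw q (- t) d e *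
            (Yop q t ^^ (b (i - 1) - e)) (\<lambda>p. Xw q p ^ (a i - d) * psi p) m)"
    unfolding BOp_def W Br opL_blk2 ..
  also have "\<dots> = (Yop q t ^^ (b (i - 1) - 1)) (Qf q t (\<lambda>p. Xw q p ^ (a i - 1) * psi p)) m"
    by (rule expandQ[OF q0 q1 ai bi])
  finally have "bfun q t m * BOp q t (WR a b s q t) (BR a b s) i psi m
      = bfun q t m * (Yop q t ^^ (b (i - 1) - 1)) (Qf q t (\<lambda>p. Xw q p ^ (a i - 1) * psi p)) m" by simp
  also have "\<dots> = zw q m * (SY q t ^^ (b (i - 1) - 1)) (Sb (\<lambda>p. bfun q t p * (Xw q p ^ (a i - 1) * psi p))) m"
    by (rule core3[OF q0 q1 g]) (use ph in simp)
  finally show ?thesis by (simp add: Kop_def)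
qed

lemma BOpR_last:
  assumes g: "good q t kt" and t0: "t \<noteq> 0" and s: "1 \<le> s" and bs: "1 \<le> b s"
  shows "bfun q t m * BOp q t (WR a b s q t) (BR a b s) (Suc s) d0 m = (- t) * Klast q t (b s) d0 m"
proof -
  have W0: "WR a b s q t (Suc s) 0 e = cw q (- t) 0 e * (if \<not> e < b s then 0 else 1)" for e
    unfolding WR_def using s by auto
  have W1: "WR a b s q t (Suc s) 1 e = 0" for e
    unfolding WR_def by simp
  have Br: "BR a b s (Suc s) d e = replicate (b s - e) LY" for d e
    unfolding BR_def using s by auto
  have B: "BOp q t (WR a b s q t) (BR a b s) (Suc s) d0 m
      = (- t) * (Yop q t ^^ b s) d0 m + (if 1 < b s then 1 else 0) * (Yop q t ^^ (b s - 1)) d0 m"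
    unfolding BOp_def sum01 W0 W1 Br using bs by simp
  show ?thesis
  proof (cases "b s = 1")
    case True
    then have "BOp q t (WR a b s q t) (BR a b s) (Suc s) d0 m = (- t) * Yop q t d0 m"
      using B by simp
    then show ?thesis using True R1[OF q0 q1 g] by (simp add: Klast_def)
  next
    case False
    then have b2: "2 \<le> b s" using bs by simp
    obtain B' where B': "b s = Suc (Suc B')" using b2 by (metis add_2_eq_Suc le_Suc_ex)
    define h where "h p = (- t) * Yop q t d0 p + d0 p" for p
    have e1: "(Yop q t ^^ Suc B') h m = (- t) * (Yop q t ^^ Suc B') (Yop q t d0) m + (Yop q t ^^ Suc B') d0 m"
      unfolding h_def by (simp only: Yopk_add Yopk_scale)
    have e2: "(Yop q t ^^ Suc B') (Yop q t d0) = (Yop q t ^^ Suc (Suc B')) d0"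
      by (simp only: funpow_Suc_app)
    have "BOp q t (WR a b s q t) (BR a b s) (Suc s) d0 m = (Yop q t ^^ Suc B') h m"
      unfolding B e1 e2 B' by simp
    then have "bfun q t m * BOp q t (WR a b s q t) (BR a b s) (Suc s) d0 m
        = zw q m * (SY q t ^^ B') (Ss h) m"
      using R2[OF q0 q1 g, of "Suc B'" m h] by simp
    also have "Ss h = (\<lambda>m. (- t) * SY q t (Sb d0) m)"
    proof
      fix m
      have "h p = (- t) * (Tw q t p * Sb d0 p)" for p
      proof (cases "p = 0")
        case True then show ?thesis using t0 by (simp add: h_def d0_def L4_0[OF q0 q1])
      next
        case False then show ?thesis by (simp add: h_def Yop_Ss Ss_d0 d0_def)
      qed
      then show "Ss h m = (- t) * SY q t (Sb d0) m"
        by (simp add: Ss_def SY_def sum_distrib_left)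
    qed
    also have "zw q m * (SY q t ^^ B') (\<lambda>m. (- t) * SY q t (Sb d0) m) m = (- t) * (zw q m * (SY q t ^^ Suc B') (Sb d0) m)"
      by (simp only: SYk_scale funpow_Suc_app mult.left_commute)
    finally show ?thesis using b2 B' by (simp add: Klast_def Kop_def)
  qed
qed

lemma BOpR_first:
  assumes s: "1 \<le> s" and a1: "1 \<le> a 1"
  shows "BOp q t (WR a b s q t) (BR a b s) 1 psi m
       = (if 2 \<le> a 1 then bfun q t m * (Xw q m ^ (a 1 - 1) * psi m) else (- t) * (Xw q m * psi m))"
proof -
  have W: "WR a b s q t 1 d e = cw q (- t) d e * (if e \<noteq> 0 then 0 else 1) * (if \<not> d < a 1 then 0 else 1)" for d e
    unfolding WR_def using s by auto
  have Br: "BR a b s 1 d e = replicate (a 1 - d) LX" for d e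
    unfolding BR_def using s by auto
  obtain A where A: "a 1 = Suc A" using a1 by (cases "a 1") auto
  then have A': "a (Suc 0) = Suc A" by simp
  show ?thesis
  proof (cases A)
    case 0 then show ?thesis unfolding BOp_def sum01 W Br by (simp add: A A')
  next
    case (Suc A2)
    then show ?thesis unfolding BOp_def sum01 W Br by (simp add: A A' bfun_def algebra_simps)
  qed
qed

lemma BOpL_first1:
  assumes a1: "a 1 = 1" and b1: "1 \<le> b 1" and sb: "s = 1 \<Longrightarrow> 2 \<le> b 1"
  shows "BOp q th (WL a b s q th) (BL a b) 1 psi m
       = Xw q m * ((- th) * Yop q th ((Yop q th ^^ (b 1 - 1)) psi) m + (Yop q th ^^ (b 1 - 1)) psi m)"
proof -
  have W: "WL a b s q th 1 0 e = cw q (- th) 0 e" "WL a b s q th 1 1 e = 0" if "e \<le> 1" for e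
    unfolding WL_def using a1 sb that by auto
  obtain B where B: "b 1 = Suc B" using b1 by (cases "b 1") auto
  then have B': "b (Suc 0) = Suc B" by simp
  have a1': "a (Suc 0) = 1" using a1 by simp
  show ?thesis
    unfolding BOp_def sum01 using W[of 0] W[of 1]
    by (simp add: BL_def opL_blk a1 a1' B B' algebra_simps)
qed

end


definition pb :: "(nat \<Rightarrow> real) \<Rightarrow> bool" where
  "pb f \<longleftrightarrow> (\<exists>C k. \<forall>m. \<bar>f m\<bar> \<le> C * (real m + 1) ^ k)"

lemma pbI: "(\<And>m. \<bar>f m\<bar> \<le> C * (real m + 1) ^ k) \<Longrightarrow> pb f"
  unfolding pb_def by blast

lemma pb_mono_pow: "0 \<le> C \<Longrightarrow> k \<le> k' \<Longrightarrow> C * (real m + 1) ^ k \<le> C * (real m + 1) ^ k'"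
  by (intro mult_left_mono power_increasing) auto

lemma pb_C_nonneg: "\<forall>m. \<bar>f m\<bar> \<le> C * (real m + 1) ^ k \<Longrightarrow> 0 \<le> C"
  by (metis abs_ge_zero mult.right_neutral of_nat_0 order_trans add_0 power_one)

lemma pb_d0: "pb d0"
  by (rule pbI[where C=1 and k=0]) (simp add: d0_def)

lemma pb_add: assumes "pb f" "pb g" shows "pb (\<lambda>m. f m + g m)"
proof -
  obtain C k where f: "\<forall>m. \<bar>f m\<bar> \<le> C * (real m + 1) ^ k" using assms(1) pb_def by blast
  obtain D l where g: "\<forall>m. \<bar>g m\<bar> \<le> D * (real m + 1) ^ l" using assms(2) pb_def by blast
  have C: "0 \<le> C" "0 \<le> D" using pb_C_nonneg f g by blast+
  show ?thesis
  proof (rule pbI[where C="C + D" and k="max k l"])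
    fix m
    have "\<bar>f m + g m\<bar> \<le> C * (real m + 1) ^ k + D * (real m + 1) ^ l"
      using f g abs_triangle_ineq[of "f m" "g m"] by (meson add_mono order_trans)
    also have "\<dots> \<le> C * (real m + 1) ^ max k l + D * (real m + 1) ^ max k l"
      using C by (intro add_mono pb_mono_pow) auto
    finally show "\<bar>f m + g m\<bar> \<le> (C + D) * (real m + 1) ^ max k l" by (simp add: algebra_simps)
  qed
qed

lemma pb_scale: assumes "pb f" shows "pb (\<lambda>m. c * f m)"
proof -
  obtain C k where f: "\<forall>m. \<bar>f m\<bar> \<le> C * (real m + 1) ^ k" using assms(1) pb_def by blast
  show ?thesis
    by (rule pbI[where C="\<bar>c\<bar> * C" and k=k]) (use f in \<open>auto simp: abs_mult mult.assoc intro: mult_left_mono\<close>)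
qed

lemma pb_sum: "finite I \<Longrightarrow> (\<And>i. i \<in> I \<Longrightarrow> pb (F i)) \<Longrightarrow> pb (\<lambda>m. \<Sum>i\<in>I. F i m)"
proof (induction I rule: finite_induct)
  case empty then show ?case by (auto intro: pbI[where C=0 and k=0])
next
  case (insert x I) then show ?case by (simp add: pb_add)
qed

lemma pb_Sb: assumes "pb f" shows "pb (Sb f)"
proof -
  obtain C k where f: "\<forall>m. \<bar>f m\<bar> \<le> C * (real m + 1) ^ k" using assms(1) pb_def by blast
  have C: "0 \<le> C" using pb_C_nonneg f by blast
  show ?thesis
  proof (rule pbI[where C=C and k="Suc k"])
    fix m
    have "\<bar>Sb f m\<bar> \<le> (\<Sum>p\<le>m. \<bar>f p\<bar>)" unfolding Sb_def by (rule sum_abs)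
    also have "\<dots> \<le> (\<Sum>p\<le>m. C * (real m + 1) ^ k)"
    proof (rule sum_mono)
      fix p assume "p \<in> {..m}"
      then have "C * (real p + 1) ^ k \<le> C * (real m + 1) ^ k"
        using C by (intro mult_left_mono power_mono) auto
      then show "\<bar>f p\<bar> \<le> C * (real m + 1) ^ k" using f by (meson order_trans)
    qed
    also have "\<dots> = C * (real m + 1) ^ Suc k" by (simp add: algebra_simps)
    finally show "\<bar>Sb f m\<bar> \<le> C * (real m + 1) ^ Suc k" .
  qed
qed

context
  fixes q :: real assumes q0: "0 < q" and q1: "q < 1"
begin

lemma Xw_abs_le1: "\<bar>Xw q m\<bar> \<le> 1"
  using Xw_nonneg[OF q0 q1] Xw_le1[OF q0 q1] by simp

lemma pb_X: assumes "pb f" shows "pb (\<lambda>m. Xw q m * f m)"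
proof -
  obtain C k where f: "\<forall>m. \<bar>f m\<bar> \<le> C * (real m + 1) ^ k" using assms(1) pb_def by blast
  show ?thesis
  proof (rule pbI[where C=C and k=k])
    fix m
    have "\<bar>Xw q m * f m\<bar> \<le> 1 * \<bar>f m\<bar>" unfolding abs_mult
      using Xw_abs_le1 by (intro mult_right_mono) auto
    then show "\<bar>Xw q m * f m\<bar> \<le> C * (real m + 1) ^ k" using f[rule_format, of m] by linarith
  qed
qed

lemma pb_Yop: assumes g: "good q th kk" and "pb f" shows "pb (Yop q th f)"
proof -
  have Sb: "pb (Sb f)" by (rule pb_Sb[OF assms(2)])
  obtain C k where f: "\<forall>m. \<bar>Sb (\<lambda>p. \<bar>f p\<bar>) m\<bar> \<le> C * (real m + 1) ^ k"
  proof -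
    obtain C k where f: "\<forall>m. \<bar>f m\<bar> \<le> C * (real m + 1) ^ k" using assms(2) pb_def by blast
    have "pb (\<lambda>m. \<bar>f m\<bar>)" by (rule pbI[where C=C and k=k]) (use f in auto)
    then have "pb (Sb (\<lambda>p. \<bar>f p\<bar>))" by (rule pb_Sb)
    then show ?thesis using that pb_def by blast
  qed
  have kk: "0 < kk" using g by (simp add: good_def)
  show ?thesis
  proof (rule pbI[where C="C / kk" and k=k])
    fix m
    show "\<bar>Yop q th f m\<bar> \<le> C / kk * (real m + 1) ^ k"
    proof (cases "m = 0")
      case True then show ?thesis using pb_C_nonneg[OF f] kk by simp
    next
      case False
      then have m1: "1 \<le> m" by simp
      have T: "0 \<le> Tw q th m" "Tw q th m \<le> 1 / kk"
        using good_Tw_pos[OF q0 q1 g m1] good_Tw_le[OF q0 q1 g m1] by auto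
      have "\<bar>Yop q th f m\<bar> = Tw q th m * \<bar>\<Sum>p<m. f p\<bar>" using False T by (simp add: Yop_def abs_mult)
      also have "\<dots> \<le> (1 / kk) * Sb (\<lambda>p. \<bar>f p\<bar>) m"
      proof (intro mult_mono T(2))
        have "\<bar>\<Sum>p<m. f p\<bar> \<le> (\<Sum>p<m. \<bar>f p\<bar>)" by (rule sum_abs)
        also have "\<dots> \<le> (\<Sum>p\<le>m. \<bar>f p\<bar>)" by (intro sum_mono2) auto
        finally show "\<bar>\<Sum>p<m. f p\<bar> \<le> Sb (\<lambda>p. \<bar>f p\<bar>) m" by (simp add: Sb_def)
      qed (use kk in auto)
      also have "\<dots> \<le> (1 / kk) * (C * (real m + 1) ^ k)"
        using f kk by (intro mult_left_mono) (auto intro: order_trans[OF abs_ge_self])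
      finally show ?thesis by simp
    qed
  qed
qed

lemma pb_Yopk: "good q th kk \<Longrightarrow> pb f \<Longrightarrow> pb ((Yop q th ^^ k) f)"
  by (induction k) (auto intro: pb_Yop)

lemma pb_opL: "good q th kk \<Longrightarrow> pb f \<Longrightarrow> pb (opL q th w f)"
proof (induction w)
  case Nil then show ?case by simp
next
  case (Cons l w)
  show ?case
  proof (cases l)
    case LX
    then show ?thesis using pb_X[OF Cons.IH[OF Cons.prems]] by simp
  next
    case LY
    have "opL q th (LY # w) f = Yop q th (opL q th w f)" by (auto intro!: ext)
    then show ?thesis using pb_Yop[OF Cons.prems(1) Cons.IH[OF Cons.prems]] LY by simp
  qed
qed

lemma pb_BOp: "good q th kk \<Longrightarrow> pb f \<Longrightarrow> pb (BOp q th W B i f)"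
  unfolding BOp_def
  by (intro pb_sum pb_scale pb_opL) auto

lemma pb_Inn: "good q th kk \<Longrightarrow> pb (Inn q th W B tp j)"
  by (induction j) (auto intro: pb_BOp pb_d0)

lemma lim_pb: assumes "pb f" shows "(\<lambda>N. q ^ N * f N) \<longlonglongrightarrow> 0"
proof -
  obtain C k where f: "\<forall>m. \<bar>f m\<bar> \<le> C * (real m + 1) ^ k" using assms pb_def by blast
  have L: "(\<lambda>n. (real n + 1) ^ k * q ^ n) \<longlonglongrightarrow> 0" using q0 q1 by real_asymp
  then have L2: "(\<lambda>n. C * ((real n + 1) ^ k * q ^ n)) \<longlonglongrightarrow> 0" by (intro tendsto_mult_right_zero)
  show ?thesis
  proof (rule Lim_null_comparison[OF _ L2])
    show "\<forall>\<^sub>F N in sequentially. norm (q ^ N * f N) \<le> C * ((real N + 1) ^ k * q ^ N)"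
    proof (intro always_eventually allI)
      fix N
      have "\<bar>q ^ N * f N\<bar> = q ^ N * \<bar>f N\<bar>" using q0 by (simp add: abs_mult)
      also have "\<dots> \<le> q ^ N * (C * (real N + 1) ^ k)" using f q0 by (intro mult_left_mono) auto
      finally show "norm (q ^ N * f N) \<le> C * ((real N + 1) ^ k * q ^ N)" by (simp add: mult_ac)
    qed
  qed
qed

lemma summable_pb: assumes "pb f" shows "summable (\<lambda>m. Xw q m * f m)"
proof -
  obtain C k where f: "\<forall>m. \<bar>f m\<bar> \<le> C * (real m + 1) ^ k" using assms pb_def by blast
  define r where "r = sqrt q"
  have r: "0 < r" "r < 1" using q0 q1 by (auto simp: r_def)
  have qr: "q ^ n = r ^ n * r ^ n" for n using q0 by (simp add: r_def power_mult_distrib[symmetric])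
  have L: "(\<lambda>n. (real n + 1) ^ k * r ^ n) \<longlonglongrightarrow> 0" using r by real_asymp
  then have ev: "\<forall>\<^sub>F n in sequentially. (real n + 1) ^ k * r ^ n < 1"
    by (rule order_tendstoD) simp
  show ?thesis
  proof (rule summable_comparison_test_ev)
    show "\<forall>\<^sub>F n in sequentially. norm (Xw q n * f n) \<le> C * r ^ n"
      using ev
    proof eventually_elim
      case (elim n)
      have "norm (Xw q n * f n) = Xw q n * \<bar>f n\<bar>"
        using Xw_nonneg[OF q0 q1, of n] by (simp add: abs_mult)
      also have "\<dots> \<le> q ^ n * (C * (real n + 1) ^ k)"
        using Xw_nonneg[OF q0 q1, of n] Xw_le_pow[OF q0 q1, of n] f[rule_format, of n] q0
        by (intro mult_mono) auto
      also have "\<dots> = C * r ^ n * ((real n + 1) ^ k * r ^ n)" by (simp add: qr mult_ac)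
      also have "\<dots> \<le> C * r ^ n * 1"
        using elim pb_C_nonneg[OF f] r by (intro mult_left_mono) auto
      finally show ?case by simp
    qed
    show "summable (\<lambda>n. C * r ^ n)" using r by (intro summable_mult summable_geometric) auto
  qed
qed

end


lemma Yopk_zero: "f 0 = 0 \<Longrightarrow> (Yop q th ^^ k) f 0 = 0"
  by (cases k) auto

context
  fixes q :: real assumes q0: "0 < q" and q1: "q < 1"
begin

lemma chain:
  fixes a b :: "nat \<Rightarrow> nat" and th t :: real
  assumes s: "1 \<le> s" and pos: "\<And>i. 1 \<le> i \<Longrightarrow> i \<le> s \<Longrightarrow> 1 \<le> a i \<and> 1 \<le> b i"
    and g: "good q th kk" and g': "good q t kt" and tdef: "t = q * th - 1" and t0: "t \<noteq> 0"
  shows "j < s \<Longrightarrow> (\<forall>m. bfun q t m * Inn q t (WR a b s q t) (BR a b s) (Suc s) (Suc j) m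
            = (- t) * (if s - j = s then Klast q t (b s) (Inn q th (WL a b s q th) (BL a b) s j) m
                       else Kop q t (b (s - j)) (Inn q th (WL a b s q th) (BL a b) s j) m))
         \<and> Inn q t (WR a b s q t) (BR a b s) (Suc s) (Suc j) 0 = 0
         \<and> (1 \<le> j \<longrightarrow> Inn q th (WL a b s q th) (BL a b) s j 0 = 0)"
proof (induction j)
  case 0
  have e: "bfun q t m * BOp q t (WR a b s q t) (BR a b s) (Suc s) d0 m = (- t) * Klast q t (b s) d0 m" for m
    using BOpR_last[OF q0 q1 g' t0 s, where b=b and a=a and m=m] pos[OF s order_refl] by simp
  have e0: "BOp q t (WR a b s q t) (BR a b s) (Suc s) d0 0 = 0" using e[of 0] by simp
  show ?case using e e0 by simp
next
  case (Suc j)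
  let ?L = "Inn q th (WL a b s q th) (BL a b) s"
  let ?R = "Inn q t (WR a b s q t) (BR a b s) (Suc s)"
  define i where "i = s - j"
  have i2: "2 \<le> i" "i \<le> s" using Suc.prems by (auto simp: i_def)
  have IH: "\<And>m. bfun q t m * ?R (Suc j) m = (- t) * (if i = s then Klast q t (b s) (?L j) m else Kop q t (b i) (?L j) m)"
    "?R (Suc j) 0 = 0" "1 \<le> j \<Longrightarrow> ?L j 0 = 0"
    using Suc.IH Suc.prems by (auto simp: i_def)
  have ai: "1 \<le> a i" "1 \<le> b i" using pos i2 by auto
  have bi1: "1 \<le> b (i - 1)" using pos[of "i - 1"] i2 by auto
  have RS: "?R (Suc (Suc j)) = BOp q t (WR a b s q t) (BR a b s) i (?R (Suc j))"
    by (simp add: i_def)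
  have LS: "?L (Suc j) = BOp q th (WL a b s q th) (BL a b) i (?L j)"
    by (simp add: i_def)
  have ph: "(i = s \<and> b s = 1) \<or> (Yop q th ^^ (b i - 1)) (?L j) 0 = 0"
  proof (cases "j = 0")
    case True
    then have "i = s" by (simp add: i_def)
    then show ?thesis using True ai by (cases "b s = 1") (auto intro: Yopk_0)
  next
    case False
    then show ?thesis using IH(3) by (auto intro: Yopk_zero)
  qed
  have Lval: "?L (Suc j) p = Xw q p ^ (a i - 1) * (if i = s then Klast q t (b s) (?L j) p else Kop q t (b i) (?L j) p)" for p
  proof -
    have i1: "1 \<le> i" using i2 by simp
    show ?thesis unfolding LS tdef
      by (rule BOpL[where a=a and b=b and i=i and s=s and psi="?L j", OF q0 q1 g i1 i2(2) ai]) (use i2 ph in auto)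
  qed
  have fun_eq: "(\<lambda>p. bfun q t p * (Xw q p ^ (a i - 1) * ?R (Suc j) p)) = (\<lambda>p. (- t) * ?L (Suc j) p)"
  proof
    fix p
    have "bfun q t p * (Xw q p ^ (a i - 1) * ?R (Suc j) p) = Xw q p ^ (a i - 1) * (bfun q t p * ?R (Suc j) p)"
      by (simp add: mult_ac)
    also have "\<dots> = (- t) * ?L (Suc j) p" unfolding IH(1) Lval by (simp add: mult_ac)
    finally show "bfun q t p * (Xw q p ^ (a i - 1) * ?R (Suc j) p) = (- t) * ?L (Suc j) p" .
  qed
  have main: "bfun q t m * ?R (Suc (Suc j)) m = (- t) * Kop q t (b (i - 1)) (?L (Suc j)) m" for m
  proof -
    have "bfun q t m * ?R (Suc (Suc j)) m = Kop q t (b (i - 1)) (\<lambda>p. bfun q t p * (Xw q p ^ (a i - 1) * ?R (Suc j) p)) m"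
      unfolding RS by (rule BOpR_mid[where a=a and b=b and i=i and s=s, OF q0 q1 g' i2 ai(1) bi1]) (use IH(2) in simp)
    then show ?thesis unfolding fun_eq Kop_scale .
  qed
  have ne: "s - Suc j \<noteq> s" "s - Suc j = i - 1" using s Suc.prems by (auto simp: i_def)
  show ?case
  proof (intro conjI allI impI)
    fix m show "bfun q t m * ?R (Suc (Suc j)) m = (- t) * (if s - Suc j = s then Klast q t (b s) (?L (Suc j)) m
                       else Kop q t (b (s - Suc j)) (?L (Suc j)) m)"
      using main ne by simp
  next
    show "?R (Suc (Suc j)) 0 = 0" using main[of 0] by simp
  next
    show "?L (Suc j) 0 = 0" using Lval[of 0] i2 ai by simp
  qed
qed

end


context
  fixes q :: real assumes q0: "0 < q" and q1: "q < 1"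
begin

lemma bfun_pos: "t < 0 \<Longrightarrow> 0 < bfun q t m"
  using Xw_nonneg[OF q0 q1, of m] unfolding bfun_def
  by (smt (verit) mult_nonpos_nonneg)

lemma tel_lim:
  assumes pb: "pb phi" and g: "good q t kt" and t0: "t \<noteq> 0"
  shows "(\<lambda>N. (Tw q t N - (1 - q)) * Sb phi N) \<longlonglongrightarrow> 0"
proof -
  have kt: "0 < kt" using g by (simp add: good_def)
  have iden: "Tw q t N - (1 - q) = (1 + (1 - q) * t) * Tw q t N * q ^ N" if "1 \<le> N" for N
  proof -
    have D: "qint q N - t * q ^ N \<noteq> 0" using good_den[OF q0 q1 g that] .
    have "(1 - q) * qint q N = 1 - q ^ N" by (rule qint_mult) (use q1 in simp)
    then show ?thesis using D unfolding Tw_def by (simp add: field_simps)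
  qed
  define c where "c = \<bar>1 + (1 - q) * t\<bar> / kt"
  have L: "(\<lambda>N. q ^ N * Sb phi N) \<longlonglongrightarrow> 0" by (rule lim_pb[OF q0 q1 pb_Sb[OF pb]])
  then have L2: "(\<lambda>N. c * \<bar>q ^ N * Sb phi N\<bar>) \<longlonglongrightarrow> 0"
    by (intro tendsto_mult_right_zero tendsto_rabs_zero)
  show ?thesis
  proof (rule Lim_null_comparison[OF _ L2])
    show "\<forall>\<^sub>F N in sequentially. norm ((Tw q t N - (1 - q)) * Sb phi N) \<le> c * \<bar>q ^ N * Sb phi N\<bar>"
    proof (rule eventually_sequentiallyI[of 1])
      fix N :: nat assume N: "1 \<le> N"
      have T: "0 \<le> Tw q t N" "Tw q t N \<le> 1 / kt"
        using good_Tw_pos[OF q0 q1 g N] good_Tw_le[OF q0 q1 g N] by auto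
      have "norm ((Tw q t N - (1 - q)) * Sb phi N) = \<bar>1 + (1 - q) * t\<bar> * Tw q t N * \<bar>q ^ N * Sb phi N\<bar>"
        using T by (simp add: iden[OF N] abs_mult mult_ac)
      also have "\<dots> \<le> \<bar>1 + (1 - q) * t\<bar> * (1 / kt) * \<bar>q ^ N * Sb phi N\<bar>"
        using T by (intro mult_right_mono mult_left_mono) auto
      finally show "norm ((Tw q t N - (1 - q)) * Sb phi N) \<le> c * \<bar>q ^ N * Sb phi N\<bar>"
        by (simp add: c_def)
    qed
  qed
qed

context
  fixes a b :: "nat \<Rightarrow> nat" and th t :: real and s :: nat and kk kt :: real
  assumes s: "1 \<le> s" and pos: "\<And>i. 1 \<le> i \<Longrightarrow> i \<le> s \<Longrightarrow> 1 \<le> a i \<and> 1 \<le> b i"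
    and g: "good q th kk" and g': "good q t kt" and tdef: "t = q * th - 1" and tneg: "t < 0"
begin

abbreviation "LL \<equiv> Inn q th (WL a b s q th) (BL a b) s"
abbreviation "RR \<equiv> Inn q t (WR a b s q t) (BR a b s) (Suc s)"

lemma t0: "t \<noteq> 0" using tneg by simp

lemma chain': "j < s \<Longrightarrow> (\<forall>m. bfun q t m * RR (Suc j) m
            = (- t) * (if s - j = s then Klast q t (b s) (LL j) m else Kop q t (b (s - j)) (LL j) m))
         \<and> RR (Suc j) 0 = 0 \<and> (1 \<le> j \<longrightarrow> LL j 0 = 0)"
  by (rule chain[OF q0 q1 s pos g g' tdef t0])

lemma final_pt:
  assumes a1: "2 \<le> a 1"
  shows "RR (Suc s) m = (- t) * LL s m"
proof -
  obtain s' where s': "s = Suc s'" using s by (cases s) auto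
  have C: "bfun q t m * RR (Suc s') m = (- t) * (if 1 = s then Klast q t (b s) (LL s') m else Kop q t (b 1) (LL s') m)"
    "1 \<le> s' \<Longrightarrow> LL s' 0 = 0"
    using chain'[of s'] s' by auto
  have R: "RR (Suc s) m = BOp q t (WR a b s q t) (BR a b s) 1 (RR (Suc s')) m" by (simp add: s')
  have L: "LL s m = BOp q th (WL a b s q th) (BL a b) 1 (LL s') m" by (simp add: s')
  have a11: "1 \<le> a 1" "1 \<le> b 1" using pos[of 1] s by auto
  have ph: "(1 = s \<and> b s = 1) \<or> (Yop q th ^^ (b 1 - 1)) (LL s') 0 = 0"
  proof (cases "s' = 0")
    case True
    then show ?thesis using s' a11 by (cases "b 1 = 1") (auto intro: Yopk_0)
  next
    case False then show ?thesis using C(2) by (auto intro: Yopk_zero)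
  qed
  have Lv: "LL s m = Xw q m ^ (a 1 - 1) * (if 1 = s then Klast q t (b s) (LL s') m else Kop q t (b 1) (LL s') m)"
    unfolding L tdef
    by (rule BOpL[where a=a and b=b and i=1 and s=s, OF q0 q1 g order_refl s a11]) (use a1 ph in auto)
  have "RR (Suc s) m = bfun q t m * (Xw q m ^ (a 1 - 1) * RR (Suc s') m)"
    unfolding R using BOpR_first[where a=a and s=s and t=t and b=b and psi="RR (Suc s')" and m=m, OF q0 q1 s a11(1)] a1 by simp
  also have "\<dots> = Xw q m ^ (a 1 - 1) * (bfun q t m * RR (Suc s') m)" by (simp add: mult_ac)
  also have "\<dots> = (- t) * LL s m" unfolding C(1) Lv by (simp add: mult_ac)
  finally show ?thesis .
qed

lemma final_tel:
  assumes a1: "a 1 = 1" and sb: "s = 1 \<Longrightarrow> 2 \<le> b 1"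
  shows "\<exists>phi. pb phi \<and> (\<forall>N. (\<Sum>m<Suc N. LL s m - RR (Suc s) m / (- t)) = (Tw q t N - (1 - q)) * Sb phi N)"
proof -
  obtain s' where s': "s = Suc s'" using s by (cases s) auto
  have C: "bfun q t m * RR (Suc s') m = (- t) * (if 1 = s then Klast q t (b s) (LL s') m else Kop q t (b 1) (LL s') m)"
    "1 \<le> s' \<Longrightarrow> LL s' 0 = 0" for m
    using chain'[of s'] s' by auto
  have b1: "1 \<le> b 1" using pos[of 1] s by auto
  define phi where "phi = (Yop q th ^^ (b 1 - 1)) (LL s')"
  have pbphi: "pb phi" unfolding phi_def by (intro pb_Yopk[OF q0 q1 g] pb_Inn[OF q0 q1 g])
  have phi0: "phi 0 = 0"
  proof (cases "2 \<le> b 1")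
    case True then show ?thesis unfolding phi_def by (intro Yopk_0) auto
  next
    case False
    then have "b 1 = 1" "s' \<noteq> 0" using b1 sb s' by auto
    then show ?thesis unfolding phi_def using C(2) by simp
  qed
  have Lv: "LL s m = Xw q m * ((- th) * Yop q th phi m + phi m)" for m
  proof -
    have "LL s m = BOp q th (WL a b s q th) (BL a b) 1 (LL s') m" by (simp add: s')
    also have "\<dots> = Xw q m * ((- th) * Yop q th phi m + phi m)"
      unfolding phi_def by (rule BOpL_first1[where a=a and b=b and s=s, OF q0 q1 a1 b1 sb])
    finally show ?thesis .
  qed
  have Rv: "RR (Suc s) m = (- t) * (Xw q m * RR (Suc s') m)" for m
  proof -
    have "RR (Suc s) m = BOp q t (WR a b s q t) (BR a b s) 1 (RR (Suc s')) m" by (simp add: s')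
    then show ?thesis using BOpR_first[where a=a and s=s and t=t and b=b and psi="RR (Suc s')" and m=m, OF q0 q1 s] a1 by simp
  qed
  have Kv: "(if 1 = s then Klast q t (b s) (LL s') m else Kop q t (b 1) (LL s') m) = zw q m * Sb phi m" for m
  proof -
    have "(if 1 = s then Klast q t (b s) (LL s') m else Kop q t (b 1) (LL s') m) = Kop q t (b 1) (LL s') m"
      using sb by (auto simp: Klast_def)
    also have "\<dots> = zw q m * Sb phi m"
      unfolding Kop_def phi_def tdef L5k[OF q0 q1] ..
    finally show ?thesis .
  qed
  have rho: "RR (Suc s') m = (- t) * Tw q t m * Sb phi m" if m1: "1 \<le> m" for m
  proof -
    have bT: "bfun q t m * Tw q t m = zw q m" using L2[OF q0 q1 g' m1] by (simp add: bfun_def)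
    have E: "bfun q t m * RR (Suc s') m = bfun q t m * ((- t) * Tw q t m * Sb phi m)"
      using C(1)[of m] Kv[of m] bT by (simp add: mult_ac)
    have nz: "bfun q t m \<noteq> 0" using bfun_pos[OF tneg, of m] by simp
    show ?thesis using mult_left_cancel[OF nz] E by blast
  qed
  define D where "D m = LL s m - RR (Suc s) m / (- t)" for m
  have D0: "D 0 = 0" unfolding D_def Lv Rv by simp
  have DS: "D (Suc n) = - Tw q t n * Sb phi n - (1 - q) * phi (Suc n) + Tw q t (Suc n) * Sb phi (Suc n)" for n
  proof -
    let ?m = "Suc n"
    have m1: "1 \<le> ?m" by simp
    define X where "X = Xw q ?m"
    define z where "z = zw q ?m"
    define A where "A = Tw q th ?m"
    define B where "B = Tw q t ?m"
    define S0 where "S0 = Sb phi n"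
    define f where "f = phi ?m"
    have f1: "z = A - th * X * A" using L2[OF q0 q1 g m1] by (simp add: z_def A_def X_def algebra_simps)
    have f2: "z = B - t * X * B" using L2[OF q0 q1 g' m1] by (simp add: z_def B_def X_def algebra_simps)
    have f3: "z = X + (1 - q)" using L3[OF q0 q1 m1] by (simp add: z_def X_def)
    have AT: "A = Tw q t n" unfolding A_def tdef L4[OF q0 q1] ..
    have Y: "Yop q th phi ?m = A * S0" by (simp add: Yop_Ss Ss_Suc A_def S0_def)
    have S1: "Sb phi ?m = S0 + f" by (simp add: Sb_def S0_def f_def)
    have "D ?m = X * ((- th) * (A * S0) + f) - X * ((- t) * B * (S0 + f))"
      unfolding D_def Lv Rv rho[OF m1] Y S1 using t0 by (simp add: X_def B_def f_def)
    also have "\<dots> = - A * S0 - (1 - q) * f + B * (S0 + f)"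
    proof -
      have e1: "X * ((- th) * (A * S0)) = (z - A) * S0" unfolding f1 by (simp add: algebra_simps)
      have e2: "X * ((- t) * B * (S0 + f)) = (z - B) * (S0 + f)" unfolding f2 by (simp add: algebra_simps)
      have "X * ((- th) * (A * S0) + f) - X * ((- t) * B * (S0 + f))
          = X * ((- th) * (A * S0)) + X * f - X * ((- t) * B * (S0 + f))"
        by (simp only: distrib_left)
      also have "\<dots> = (z - A) * S0 + X * f - (z - B) * (S0 + f)"
        by (simp only: e1 e2)
      finally have "X * ((- th) * (A * S0) + f) - X * ((- t) * B * (S0 + f)) = (z - A) * S0 + X * f - (z - B) * (S0 + f)" .
      then show ?thesis unfolding f3 by (simp add: algebra_simps)
    qed
    moreover have S1': "Sb phi n + phi (Suc n) = Sb phi (Suc n)" by (simp add: Sb_def)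
    ultimately show ?thesis by (simp add: AT f_def S0_def B_def)
  qed
  have sumD: "(\<Sum>m<Suc N. D m) = (Tw q t N - (1 - q)) * Sb phi N" for N
  proof (induction N)
    case 0 then show ?case using D0 phi0 by (simp add: Sb_def)
  next
    case (Suc N)
    have "(\<Sum>m<Suc (Suc N). D m) = (Tw q t N - (1 - q)) * Sb phi N + D (Suc N)"
      using Suc by simp
    also have "\<dots> = (Tw q t (Suc N) - (1 - q)) * Sb phi (Suc N)"
      unfolding DS by (simp add: Sb_def algebra_simps)
    finally show ?case .
  qed
  show ?thesis using pbphi sumD unfolding D_def by blast
qed

lemma final_eq:
  assumes sb: "a 1 = 1 \<Longrightarrow> s = 1 \<Longrightarrow> 2 \<le> b 1"
    and V: "(\<lambda>m. LL s m) sums V" and W: "(\<lambda>m. RR (Suc s) m) sums W"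
  shows "V = W / (- t)"
proof (cases "2 \<le> a 1")
  case True
  have "(\<lambda>m. (- t) * LL s m) sums ((- t) * V)" by (rule sums_mult[OF V])
  then have "(\<lambda>m. RR (Suc s) m) sums ((- t) * V)" using final_pt[OF True] by simp
  then have "W = (- t) * V" using W sums_unique2 by blast
  then show ?thesis using t0 by simp
next
  case False
  then have a1: "a 1 = 1" using pos[of 1] s by auto
  obtain phi where phi: "pb phi" "\<And>N. (\<Sum>m<Suc N. LL s m - RR (Suc s) m / (- t)) = (Tw q t N - (1 - q)) * Sb phi N"
    using final_tel[OF a1 sb[OF a1]] by blast
  have "(\<lambda>m. LL s m - RR (Suc s) m / (- t)) sums (V - W / (- t))"
    by (intro sums_diff V sums_divide W)
  then have "(\<lambda>N. \<Sum>m<N. LL s m - RR (Suc s) m / (- t)) \<longlonglongrightarrow> V - W / (- t)"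
    by (simp add: sums_def)
  then have "(\<lambda>N. \<Sum>m<Suc N. LL s m - RR (Suc s) m / (- t)) \<longlonglongrightarrow> V - W / (- t)"
    by (rule LIMSEQ_Suc)
  moreover have "(\<lambda>N. \<Sum>m<Suc N. LL s m - RR (Suc s) m / (- t)) \<longlonglongrightarrow> 0"
    unfolding phi(2) by (rule tel_lim[OF phi(1) g' t0])
  ultimately have "V - W / (- t) = 0" by (rule LIMSEQ_unique)
  then show ?thesis by simp
qed

end

end


lemma xy_word_Suc: "xy_word (Suc n) u v = xy_word n u v @ (replicate (u (Suc n)) LX @ replicate (v (Suc n)) LY)"
  by (simp add: xy_word_def)

lemma xy_word_hd: assumes "1 \<le> s" "1 \<le> u 1" shows "\<exists>w'. xy_word s u v = LX # w'"
proof -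
  define f where "f = (\<lambda>i. replicate (u i) LX @ replicate (v i) LY)"
  have e1: "[1..<s+1] = 1 # [Suc 1..<s+1]" using assms(1) by (intro upt_conv_Cons) simp
  have e2: "xy_word s u v = f 1 @ concat (map f [Suc 1..<s+1])"
    unfolding xy_word_def f_def[symmetric] e1 by (simp only: list.map concat.simps)
  obtain k where k: "u 1 = Suc k" using assms(2) by (cases "u 1") auto
  have "f 1 = LX # (replicate k LX @ replicate (v 1) LY)" unfolding f_def k by simp
  then show ?thesis unfolding e2 by simp
qed

lemma xy_word_last: assumes "1 \<le> s" "1 \<le> v s" shows "xy_word s u v \<noteq> [] \<and> last (xy_word s u v) = LY"
proof -
  obtain s' where s': "s = Suc s'" using assms(1) by (cases s) auto
  obtain k where k: "v s = Suc k" using assms(2) by (cases "v s") auto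
  have "replicate (v s) LY = replicate k LY @ [LY]" unfolding k by (simp add: replicate_append_same)
  then show ?thesis unfolding s' xy_word_Suc by (simp add: s'[symmetric])
qed

lemma xy_word_BL: "xy_word s (\<lambda>i. a i - \<delta> i) (\<lambda>i. b i - \<epsilon> i) = concat (map (\<lambda>i. BL a b i (\<delta> i) (\<epsilon> i)) [1..<s+1])"
  by (simp add: xy_word_def BL_def)

lemma wordR_gen: "n \<le> s \<Longrightarrow> concat (map (\<lambda>i. BR a b s i (\<delta> i) (\<epsilon> i)) [1..<n+2])
   = xy_word n (\<lambda>i. a i - \<delta> i) (\<lambda>i. b i - \<epsilon> (i + 1)) @ replicate (if n + 1 \<le> s then a (n + 1) - \<delta> (n + 1) else 0) LX"
proof (induction n)
  case 0
  have u: "[1..<0+2] = [1::nat]" by simp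
  show ?case unfolding u by (simp add: BR_def xy_word_def)
next
  case (Suc n)
  define F where "F = (\<lambda>i. BR a b s i (\<delta> i) (\<epsilon> i))"
  have u: "[1..<Suc n + 2] = [1..<n+2] @ [n + 2]" by simp
  have le: "n \<le> s" "n + 1 \<le> s" using Suc.prems by auto
  have IH: "concat (map F [1..<n+2]) = xy_word n (\<lambda>i. a i - \<delta> i) (\<lambda>i. b i - \<epsilon> (i + 1)) @ replicate (a (n + 1) - \<delta> (n + 1)) LX"
    using Suc.IH[OF le(1)] le(2) unfolding F_def by (simp del: upt_Suc)
  have Fn: "F (n + 2) = replicate (b (n + 1) - \<epsilon> (n + 2)) LY @ replicate (if n + 2 \<le> s then a (n + 2) - \<delta> (n + 2) else 0) LX"
    unfolding F_def BR_def by simp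
  have "concat (map F [1..<Suc n+2]) = concat (map F [1..<n+2]) @ F (n + 2)"
    unfolding u by (simp only: map_append concat_append list.map concat.simps append_Nil2)
  also have "\<dots> = xy_word (Suc n) (\<lambda>i. a i - \<delta> i) (\<lambda>i. b i - \<epsilon> (i + 1)) @ replicate (if Suc n + 1 \<le> s then a (Suc n + 1) - \<delta> (Suc n + 1) else 0) LX"
    unfolding IH Fn xy_word_Suc by (simp del: upt_Suc)
  finally show ?case unfolding F_def .
qed

lemma wordR: "1 \<le> s \<Longrightarrow> xy_word s (\<lambda>i. a i - \<delta> i) (\<lambda>i. b i - \<epsilon> (i + 1)) = concat (map (\<lambda>i. BR a b s i (\<delta> i) (\<epsilon> i)) [1..<s+1+1])"
  using wordR_gen[of s s a b \<delta> \<epsilon>] by simp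

lemma prod_ind: "finite A \<Longrightarrow> (\<Prod>i\<in>A. (if i = c \<and> P i then 0 else 1::real)) = (if P c \<and> c \<in> A then 0 else 1)"
proof -
  assume A: "finite A"
  have "(\<Prod>i\<in>A. (if i = c \<and> P i then 0 else 1::real)) = (\<Prod>i\<in>A. (if i = c then (if P c then 0 else 1) else 1::real))"
    by (rule prod.cong) auto
  also have "\<dots> = (if c \<in> A then (if P c then 0 else 1) else 1)" using A by simp
  finally show ?thesis by simp
qed

lemma prodWL:
  assumes s: "1 \<le> s"
  shows "(\<Prod>i\<in>{1..s}. WL a b s q th i (\<delta> i) (\<epsilon> i))
     = (if \<delta> 1 < a 1 \<and> \<epsilon> s < b s then (- th) ^ (\<Sum>i=1..s. (1 - \<delta> i) * (1 - \<epsilon> i)) * (1 - q) ^ (\<Sum>i=1..s. \<delta> i * \<epsilon> i) else 0)"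
proof -
  have "(\<Prod>i\<in>{1..s}. WL a b s q th i (\<delta> i) (\<epsilon> i))
      = (\<Prod>i\<in>{1..s}. (- th) ^ ((1 - \<delta> i) * (1 - \<epsilon> i))) * (\<Prod>i\<in>{1..s}. (1 - q) ^ (\<delta> i * \<epsilon> i))
        * (\<Prod>i\<in>{1..s}. (if i = 1 \<and> \<not> \<delta> i < a 1 then 0 else 1)) * (\<Prod>i\<in>{1..s}. (if i = s \<and> \<not> \<epsilon> i < b s then 0 else 1))"
    unfolding WL_def cw_def prod.distrib ..
  also have "\<dots> = (- th) ^ (\<Sum>i=1..s. (1 - \<delta> i) * (1 - \<epsilon> i)) * (1 - q) ^ (\<Sum>i=1..s. \<delta> i * \<epsilon> i)
        * (if \<not> \<delta> 1 < a 1 then 0 else 1) * (if \<not> \<epsilon> s < b s then 0 else 1)"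
    using s by (simp only: power_sum prod_ind[OF finite_atLeastAtMost]) simp
  finally show ?thesis by simp
qed

lemma prodWR:
  assumes s: "1 \<le> s"
  shows "(\<Prod>i\<in>{1..s+1}. WR a b s q t i (\<delta> i) (\<epsilon> i))
     = (if \<delta> (s + 1) = 0 \<and> \<delta> 1 < a 1 \<and> \<epsilon> 1 = 0 \<and> \<epsilon> (s + 1) < b s
        then (- t) ^ (\<Sum>i=1..s+1. (1 - \<delta> i) * (1 - \<epsilon> i)) * (1 - q) ^ (\<Sum>i=1..s+1. \<delta> i * \<epsilon> i) else 0)"
proof -
  have "(\<Prod>i\<in>{1..s+1}. WR a b s q t i (\<delta> i) (\<epsilon> i))
      = (\<Prod>i\<in>{1..s+1}. (- t) ^ ((1 - \<delta> i) * (1 - \<epsilon> i))) * (\<Prod>i\<in>{1..s+1}. (1 - q) ^ (\<delta> i * \<epsilon> i))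
        * (\<Prod>i\<in>{1..s+1}. (if i = s + 1 \<and> \<delta> i \<noteq> 0 then 0 else 1))
        * (\<Prod>i\<in>{1..s+1}. (if i = 1 \<and> \<epsilon> i \<noteq> 0 then 0 else 1))
        * (\<Prod>i\<in>{1..s+1}. (if i = 1 \<and> \<not> \<delta> i < a 1 then 0 else 1))
        * (\<Prod>i\<in>{1..s+1}. (if i = s + 1 \<and> \<not> \<epsilon> i < b s then 0 else 1))"
    unfolding WR_def cw_def prod.distrib ..
  also have "\<dots> = (- t) ^ (\<Sum>i=1..s+1. (1 - \<delta> i) * (1 - \<epsilon> i)) * (1 - q) ^ (\<Sum>i=1..s+1. \<delta> i * \<epsilon> i)
        * (if \<delta> (s + 1) \<noteq> 0 then 0 else 1) * (if \<epsilon> 1 \<noteq> 0 then 0 else 1)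
        * (if \<not> \<delta> 1 < a 1 then 0 else 1) * (if \<not> \<epsilon> (s + 1) < b s then 0 else 1)"
    using s by (simp only: power_sum prod_ind[OF finite_atLeastAtMost]) simp
  finally show ?thesis by simp
qed


lemma sum_if_out: "(if P then sum f A else 0) = sum (\<lambda>x. if P then f x else 0) A"
  by simp

theorem theorem3p5:
  fixes q \<theta> :: real and s :: nat and a b :: "nat \<Rightarrow> nat"
  assumes "0 < q" "q < 1" "1 \<le> s"
    and "\<forall>i\<in>{1..s}. 0 < a i" "\<forall>i\<in>{1..s}. 0 < b i"
    and "(\<Sum>i=1..s. a i + b i) > 2"
    and "\<bar>\<theta>\<bar> < 1 / q" "\<theta> \<noteq> 1 / q"
  shows
   "(\<Sum>\<delta>\<in>{\<delta>\<in>{1..s} \<rightarrow>\<^sub>E {0,1}. \<delta> 1 < a 1}.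
     \<Sum>\<epsilon>\<in>{\<epsilon>\<in>{1..s} \<rightarrow>\<^sub>E {0,1}. \<epsilon> s < b s}.
       (- complex_of_real \<theta>) ^ (\<Sum>i=1..s. (1 - \<delta> i) * (1 - \<epsilon> i))
       * complex_of_real (1 - q) ^ (\<Sum>i=1..s. \<delta> i * \<epsilon> i)
       * fq q (xy_word s (\<lambda>i. a i - \<delta> i) (\<lambda>i. b i - \<epsilon> i)) (complex_of_real \<theta>))
  = (\<Sum>\<delta>\<in>{\<delta>\<in>{1..s+1} \<rightarrow>\<^sub>E {0,1}. \<delta> (s+1) = 0 \<and> \<delta> 1 < a 1}.
     \<Sum>\<epsilon>\<in>{\<epsilon>\<in>{1..s+1} \<rightarrow>\<^sub>E {0,1}. \<epsilon> 1 = 0 \<and> \<epsilon> (s+1) < b s}.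
       (- complex_of_real (q * \<theta> - 1)) powi
           (int (\<Sum>i=1..s+1. (1 - \<delta> i) * (1 - \<epsilon> i)) - 1)
       * complex_of_real (1 - q) ^ (\<Sum>i=1..s+1. \<delta> i * \<epsilon> i)
       * fq q (xy_word s (\<lambda>i. a i - \<delta> i) (\<lambda>i. b i - \<epsilon> (i+1)))
              (complex_of_real (q * \<theta> - 1)))"
proof -
  define t where "t = q * \<theta> - 1"
  have q0: "0 < q" and q1: "q < 1" using assms by auto
  have g: "good q \<theta> (1 - \<bar>\<theta>\<bar> * q)" by (rule good_theta) (use assms in auto)
  have g': "good q t 1" unfolding t_def by (rule good_theta') (use assms in auto)
  have "\<theta> < 1 / q" using assms(7) by (simp add: abs_less_iff)
  then have qth: "q * \<theta> < 1" using q0 by (simp add: field_simps)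
  have tneg: "t < 0" using qth by (simp add: t_def)
  have s: "1 \<le> s" by (rule assms(3))
  have pos: "\<And>i. 1 \<le> i \<Longrightarrow> i \<le> s \<Longrightarrow> 1 \<le> a i \<and> 1 \<le> b i"
    using assms(4,5) by (simp add: Suc_le_eq)
  have sb: "a 1 = 1 \<Longrightarrow> s = 1 \<Longrightarrow> 2 \<le> b 1" using assms(6) by auto
  define DL where "DL = {\<delta> \<in> {1..s} \<rightarrow>\<^sub>E {0,1::nat}. \<delta> 1 < a 1}"
  define EL where "EL = {\<epsilon> \<in> {1..s} \<rightarrow>\<^sub>E {0,1::nat}. \<epsilon> s < b s}"
  define DR where "DR = {\<delta> \<in> {1..s+1} \<rightarrow>\<^sub>E {0,1::nat}. \<delta> (s+1) = 0 \<and> \<delta> 1 < a 1}"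
  define ER where "ER = {\<epsilon> \<in> {1..s+1} \<rightarrow>\<^sub>E {0,1::nat}. \<epsilon> 1 = 0 \<and> \<epsilon> (s+1) < b s}"
  define wL where "wL \<delta> \<epsilon> = xy_word s (\<lambda>i. a i - \<delta> i) (\<lambda>i. b i - \<epsilon> i)" for \<delta> \<epsilon> :: "nat \<Rightarrow> nat"
  define wR where "wR \<delta> \<epsilon> = xy_word s (\<lambda>i. a i - \<delta> i) (\<lambda>i. b i - \<epsilon> (i + 1))" for \<delta> \<epsilon> :: "nat \<Rightarrow> nat"
  define cL where "cL \<delta> \<epsilon> = (- \<theta>) ^ (\<Sum>i=1..s. (1 - \<delta> i) * (1 - \<epsilon> i)) * (1 - q) ^ (\<Sum>i=1..s. \<delta> i * \<epsilon> i)"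
    for \<delta> \<epsilon> :: "nat \<Rightarrow> nat"
  define cR where "cR \<delta> \<epsilon> = (- t) powi (int (\<Sum>i=1..s+1. (1 - \<delta> i) * (1 - \<epsilon> i)) - 1) * (1 - q) ^ (\<Sum>i=1..s+1. \<delta> i * \<epsilon> i)"
    for \<delta> \<epsilon> :: "nat \<Rightarrow> nat"
  have finPiE: "finite ({1..n::nat} \<rightarrow>\<^sub>E {0,1::nat})" for n by (rule finite_PiE) auto
  have finDL: "finite DL" "finite EL" "finite DR" "finite ER"
    unfolding DL_def EL_def DR_def ER_def using finPiE by auto
  have wLok: "(\<exists>w'. wL \<delta> \<epsilon> = LX # w') \<and> wL \<delta> \<epsilon> \<noteq> [] \<and> last (wL \<delta> \<epsilon>) = LY" if "\<delta> \<in> DL" "\<epsilon> \<in> EL" for \<delta> \<epsilon>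
  proof -
    have "1 \<le> a 1 - \<delta> 1" "1 \<le> b s - \<epsilon> s" using that unfolding DL_def EL_def by auto
    then show ?thesis unfolding wL_def using xy_word_hd[OF s] xy_word_last[OF s] by auto
  qed
  have wRok: "(\<exists>w'. wR \<delta> \<epsilon> = LX # w') \<and> wR \<delta> \<epsilon> \<noteq> [] \<and> last (wR \<delta> \<epsilon>) = LY" if "\<delta> \<in> DR" "\<epsilon> \<in> ER" for \<delta> \<epsilon>
  proof -
    have "1 \<le> a 1 - \<delta> 1" "1 \<le> b s - \<epsilon> (s + 1)" using that unfolding DR_def ER_def by auto
    then show ?thesis unfolding wR_def using xy_word_hd[OF s] xy_word_last[OF s, of "\<lambda>i. b i - \<epsilon> (i + 1)"] by auto
  qed
  have summw: "summable (\<lambda>m. opL q th w d0 m)" if gg: "good q th k" and ww: "\<exists>w'. w = LX # w'" for th k w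
  proof -
    obtain w' where w: "w = LX # w'" using ww by blast
    show ?thesis unfolding w using summable_pb[OF q0 q1 pb_opL[OF q0 q1 gg pb_d0, of w']] by simp
  qed
  define VL where "VL \<delta> \<epsilon> = suminf (\<lambda>m. opL q \<theta> (wL \<delta> \<epsilon>) d0 m)" for \<delta> \<epsilon>
  define VR where "VR \<delta> \<epsilon> = suminf (\<lambda>m. opL q t (wR \<delta> \<epsilon>) d0 m)" for \<delta> \<epsilon>
  have sL: "(\<lambda>m. opL q \<theta> (wL \<delta> \<epsilon>) d0 m) sums VL \<delta> \<epsilon>" if "\<delta> \<in> DL" "\<epsilon> \<in> EL" for \<delta> \<epsilon>
    unfolding VL_def using summw[OF g] wLok[OF that] by (blast intro: summable_sums)
  have sR: "(\<lambda>m. opL q t (wR \<delta> \<epsilon>) d0 m) sums VR \<delta> \<epsilon>" if "\<delta> \<in> DR" "\<epsilon> \<in> ER" for \<delta> \<epsilon>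
    unfolding VR_def using summw[OF g'] wRok[OF that] by (blast intro: summable_sums)
  have fL: "fq q (wL \<delta> \<epsilon>) (complex_of_real \<theta>) = complex_of_real (VL \<delta> \<epsilon>)" if "\<delta> \<in> DL" "\<epsilon> \<in> EL" for \<delta> \<epsilon>
    using bridge[OF q0 q1 g _ _ sL[OF that]] wLok[OF that] by blast
  have fR: "fq q (wR \<delta> \<epsilon>) (complex_of_real t) = complex_of_real (VR \<delta> \<epsilon>)" if "\<delta> \<in> DR" "\<epsilon> \<in> ER" for \<delta> \<epsilon>
    using bridge[OF q0 q1 g' _ _ sR[OF that]] wRok[OF that] by blast
  have LHSeq: "(\<Sum>\<delta>\<in>DL. \<Sum>\<epsilon>\<in>EL. (- complex_of_real \<theta>) ^ (\<Sum>i=1..s. (1 - \<delta> i) * (1 - \<epsilon> i))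
       * complex_of_real (1 - q) ^ (\<Sum>i=1..s. \<delta> i * \<epsilon> i)
       * fq q (xy_word s (\<lambda>i. a i - \<delta> i) (\<lambda>i. b i - \<epsilon> i)) (complex_of_real \<theta>))
     = complex_of_real (\<Sum>\<delta>\<in>DL. \<Sum>\<epsilon>\<in>EL. cL \<delta> \<epsilon> * VL \<delta> \<epsilon>)"
    unfolding of_real_sum
    by (rule sum.cong[OF refl], rule sum.cong[OF refl]) (simp add: fL[unfolded wL_def] cL_def)
  have RHSeq: "(\<Sum>\<delta>\<in>DR. \<Sum>\<epsilon>\<in>ER. (- complex_of_real t) powi (int (\<Sum>i=1..s+1. (1 - \<delta> i) * (1 - \<epsilon> i)) - 1)
       * complex_of_real (1 - q) ^ (\<Sum>i=1..s+1. \<delta> i * \<epsilon> i)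
       * fq q (xy_word s (\<lambda>i. a i - \<delta> i) (\<lambda>i. b i - \<epsilon> (i+1))) (complex_of_real t))
     = complex_of_real (\<Sum>\<delta>\<in>DR. \<Sum>\<epsilon>\<in>ER. cR \<delta> \<epsilon> * VR \<delta> \<epsilon>)"
    unfolding of_real_sum
    by (rule sum.cong[OF refl], rule sum.cong[OF refl]) (simp add: fR[unfolded wR_def Suc_eq_plus1[symmetric]] cR_def)
  let ?LL = "Inn q \<theta> (WL a b s q \<theta>) (BL a b) s"
  let ?RR = "Inn q t (WR a b s q t) (BR a b s) (Suc s)"
  have ptL: "(\<Sum>\<delta>\<in>DL. \<Sum>\<epsilon>\<in>EL. cL \<delta> \<epsilon> * opL q \<theta> (wL \<delta> \<epsilon>) d0 m) = ?LL s m" for m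
  proof -
    have "(\<Sum>\<delta>\<in>DL. \<Sum>\<epsilon>\<in>EL. cL \<delta> \<epsilon> * opL q \<theta> (wL \<delta> \<epsilon>) d0 m)
        = (\<Sum>\<delta>\<in>{1..s} \<rightarrow>\<^sub>E {0,1::nat}. \<Sum>\<epsilon>\<in>{1..s} \<rightarrow>\<^sub>E {0,1::nat}.
             (if \<delta> 1 < a 1 then (if \<epsilon> s < b s then cL \<delta> \<epsilon> * opL q \<theta> (wL \<delta> \<epsilon>) d0 m else 0) else 0))"
      unfolding DL_def EL_def by (simp only: sum.inter_filter[OF finPiE] sum_if_out)
    also have "\<dots> = (\<Sum>\<delta>\<in>{1..s} \<rightarrow>\<^sub>E {0,1::nat}. \<Sum>\<epsilon>\<in>{1..s} \<rightarrow>\<^sub>E {0,1::nat}.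
             (\<Prod>i\<in>{1..s}. WL a b s q \<theta> i (\<delta> i) (\<epsilon> i)) * opL q \<theta> (concat (map (\<lambda>i. BL a b i (\<delta> i) (\<epsilon> i)) [1..<s+1])) d0 m)"
      unfolding prodWL[OF s] wL_def xy_word_BL cL_def by (intro sum.cong refl) auto
    also have "\<dots> = Comp q \<theta> (WL a b s q \<theta>) (BL a b) s d0 m" by (rule G1)
    also have "\<dots> = ?LL s m" using Comp_Inn[of s s q \<theta> "WL a b s q \<theta>" "BL a b"] by simp
    finally show ?thesis .
  qed
  have powt: "(- t) ^ n = (- t) * ((- t) powi (int n - 1))" for n
    using power_int_minus_mult[of "- t" "int n"] tneg by (simp add: mult.commute)
  have ptR: "(- t) * (\<Sum>\<delta>\<in>DR. \<Sum>\<epsilon>\<in>ER. cR \<delta> \<epsilon> * opL q t (wR \<delta> \<epsilon>) d0 m) = ?RR (Suc s) m" for m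
  proof -
    have "(- t) * (\<Sum>\<delta>\<in>DR. \<Sum>\<epsilon>\<in>ER. cR \<delta> \<epsilon> * opL q t (wR \<delta> \<epsilon>) d0 m)
        = (\<Sum>\<delta>\<in>DR. \<Sum>\<epsilon>\<in>ER. ((- t) ^ (\<Sum>i=1..s+1. (1 - \<delta> i) * (1 - \<epsilon> i)) * (1 - q) ^ (\<Sum>i=1..s+1. \<delta> i * \<epsilon> i))
               * opL q t (wR \<delta> \<epsilon>) d0 m)"
      unfolding sum_distrib_left cR_def powt by (simp add: mult_ac)
    also have "\<dots> = (\<Sum>\<delta>\<in>{1..s+1} \<rightarrow>\<^sub>E {0,1::nat}. \<Sum>\<epsilon>\<in>{1..s+1} \<rightarrow>\<^sub>E {0,1::nat}.
             (if \<delta> (s+1) = 0 \<and> \<delta> 1 < a 1 then (if \<epsilon> 1 = 0 \<and> \<epsilon> (s+1) < b s then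
               ((- t) ^ (\<Sum>i=1..s+1. (1 - \<delta> i) * (1 - \<epsilon> i)) * (1 - q) ^ (\<Sum>i=1..s+1. \<delta> i * \<epsilon> i)) * opL q t (wR \<delta> \<epsilon>) d0 m
               else 0) else 0))"
      unfolding DR_def ER_def by (simp only: sum.inter_filter[OF finPiE] sum_if_out)
    also have "\<dots> = (\<Sum>\<delta>\<in>{1..s+1} \<rightarrow>\<^sub>E {0,1::nat}. \<Sum>\<epsilon>\<in>{1..s+1} \<rightarrow>\<^sub>E {0,1::nat}.
             (\<Prod>i\<in>{1..s+1}. WR a b s q t i (\<delta> i) (\<epsilon> i)) * opL q t (concat (map (\<lambda>i. BR a b s i (\<delta> i) (\<epsilon> i)) [1..<s+1+1])) d0 m)"
      unfolding prodWR[OF s] wR_def wordR[OF s] by (intro sum.cong refl) auto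
    also have "\<dots> = Comp q t (WR a b s q t) (BR a b s) (s + 1) d0 m" by (rule G1)
    also have "\<dots> = ?RR (Suc s) m" using Comp_Inn[of "Suc s" "Suc s" q t "WR a b s q t" "BR a b s"] by simp
    finally show ?thesis .
  qed
  have sumL: "(\<lambda>m. ?LL s m) sums (\<Sum>\<delta>\<in>DL. \<Sum>\<epsilon>\<in>EL. cL \<delta> \<epsilon> * VL \<delta> \<epsilon>)"
  proof -
    have "(\<lambda>m. \<Sum>\<delta>\<in>DL. \<Sum>\<epsilon>\<in>EL. cL \<delta> \<epsilon> * opL q \<theta> (wL \<delta> \<epsilon>) d0 m) sums (\<Sum>\<delta>\<in>DL. \<Sum>\<epsilon>\<in>EL. cL \<delta> \<epsilon> * VL \<delta> \<epsilon>)"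
      by (intro sums_sum sums_mult sL)
    then show ?thesis unfolding ptL .
  qed
  have sumR: "(\<lambda>m. ?RR (Suc s) m) sums ((- t) * (\<Sum>\<delta>\<in>DR. \<Sum>\<epsilon>\<in>ER. cR \<delta> \<epsilon> * VR \<delta> \<epsilon>))"
  proof -
    have "(\<lambda>m. (- t) * (\<Sum>\<delta>\<in>DR. \<Sum>\<epsilon>\<in>ER. cR \<delta> \<epsilon> * opL q t (wR \<delta> \<epsilon>) d0 m)) sums ((- t) * (\<Sum>\<delta>\<in>DR. \<Sum>\<epsilon>\<in>ER. cR \<delta> \<epsilon> * VR \<delta> \<epsilon>))"
      by (intro sums_mult sums_sum sR)
    then show ?thesis unfolding ptR .
  qed
  have "(\<Sum>\<delta>\<in>DL. \<Sum>\<epsilon>\<in>EL. cL \<delta> \<epsilon> * VL \<delta> \<epsilon>) = ((- t) * (\<Sum>\<delta>\<in>DR. \<Sum>\<epsilon>\<in>ER. cR \<delta> \<epsilon> * VR \<delta> \<epsilon>)) / (- t)"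
    by (rule final_eq[OF q0 q1 s pos g g' t_def tneg sb sumL sumR])
  then have main: "(\<Sum>\<delta>\<in>DL. \<Sum>\<epsilon>\<in>EL. cL \<delta> \<epsilon> * VL \<delta> \<epsilon>) = (\<Sum>\<delta>\<in>DR. \<Sum>\<epsilon>\<in>ER. cR \<delta> \<epsilon> * VR \<delta> \<epsilon>)"
    using tneg by simp
  show ?thesis
    unfolding DL_def[symmetric] EL_def[symmetric] DR_def[symmetric] ER_def[symmetric] t_def[symmetric]
    using LHSeq RHSeq main by simp
qed

end
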